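(* Let $\phi$ be a qubit channel (completely positive, trace-preserving map on $\mathcal M(2;\mathbb C)$) with $\det\phi=0$. Then $\phi$ is entanglement-breaking.
   Context: $\det\phi$ is the determinant of $\phi$ as a linear operator on the 4-dimensional space $\mathcal M(2;\mathbb C)$. A channel is entanglement-breaking if $(\phi\otimes I)(\rho)$ is separable for every bipartite state $\rho$. *)

theory Defs
  imports "Jordan_Normal_Form.Determinant"
begin

text \<open>The qubit
 algebra M(2;C) is carrier_mat 2 2. The composite system C^2 (x) C^n is indexed
 by a*n + k with a < 2 (qubit index) and k < n (ancilla index).\<close>

definition trace :: "complex mat \<Rightarrow> complex" where
  "trace A = (\<Sum>i<dim_row A. A $$ (i, i))"

definition psd :: "nat \<Rightarrow> complex mat \<Rightarrow> bool" where
  "psd n A \<longleftrightarrow> A \<in> carrier_mat n n \<and>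
     (\<forall>v :: nat \<Rightarrow> complex. \<exists>r::real. r \<ge> 0 \<and>
        (\<Sum>i<n. \<Sum>j<n. cnj (v i) * A $$ (i, j) * v j) = complex_of_real r)"

definition is_state :: "nat \<Rightarrow> complex mat \<Rightarrow> bool" where
  "is_state n A \<longleftrightarrow> psd n A \<and> trace A = 1"

definition kron :: "complex mat \<Rightarrow> complex mat \<Rightarrow> complex mat" where
  "kron A B = mat (dim_row A * dim_row B) (dim_col A * dim_col B)
     (\<lambda>(i, j). A $$ (i div dim_row B, j div dim_col B) * B $$ (i mod dim_row B, j mod dim_col B))"

text \<open>(phi (x) I_n)(rho) for rho acting on C^2 (x) C^n: apply phi to each 2x2 block
 rho_{kl} = (rho((a,k),(b,l)))_{a,b}.\<close>
definition tensor_id :: "(complex mat \<Rightarrow> complex mat) \<Rightarrow> nat \<Rightarrow> complex mat \<Rightarrow> complex mat" where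
  "tensor_id \<phi> n \<rho> = mat (2 * n) (2 * n)
     (\<lambda>(i, j). (\<phi> (mat 2 2 (\<lambda>(a, b). \<rho> $$ (a * n + i mod n, b * n + j mod n)))) $$ (i div n, j div n))"

definition qubit_linear :: "(complex mat \<Rightarrow> complex mat) \<Rightarrow> bool" where
  "qubit_linear \<phi> \<longleftrightarrow>
     (\<forall>X \<in> carrier_mat 2 2. \<phi> X \<in> carrier_mat 2 2) \<and>
     (\<forall>X \<in> carrier_mat 2 2. \<forall>Y \<in> carrier_mat 2 2. \<phi> (X + Y) = \<phi> X + \<phi> Y) \<and>
     (\<forall>X \<in> carrier_mat 2 2. \<forall>c. \<phi> (c \<cdot>\<^sub>m X) = c \<cdot>\<^sub>m \<phi> X)"

definition completely_positive :: "(complex mat \<Rightarrow> complex mat) \<Rightarrow> bool" where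
  "completely_positive \<phi> \<longleftrightarrow>
     (\<forall>n \<rho>. psd (2 * n) \<rho> \<longrightarrow> psd (2 * n) (tensor_id \<phi> n \<rho>))"

definition trace_preserving :: "(complex mat \<Rightarrow> complex mat) \<Rightarrow> bool" where
  "trace_preserving \<phi> \<longleftrightarrow> (\<forall>X \<in> carrier_mat 2 2. trace (\<phi> X) = trace X)"

definition qubit_channel :: "(complex mat \<Rightarrow> complex mat) \<Rightarrow> bool" where
  "qubit_channel \<phi> \<longleftrightarrow> qubit_linear \<phi> \<and> completely_positive \<phi> \<and> trace_preserving \<phi>"

text \<open>Matrix units E_ab of M(2;C) and the 4x4 matrix of phi w.r.t. the basis
 E_00, E_01, E_10, E_11 (index c = 2a + b).\<close>
definition unit2 :: "nat \<Rightarrow> nat \<Rightarrow> complex mat" where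
  "unit2 a b = mat 2 2 (\<lambda>(i, j). if i = a \<and> j = b then 1 else 0)"

definition superop_matrix :: "(complex mat \<Rightarrow> complex mat) \<Rightarrow> complex mat" where
  "superop_matrix \<phi> = mat 4 4 (\<lambda>(r, c). \<phi> (unit2 (c div 2) (c mod 2)) $$ (r div 2, r mod 2))"

definition det_superop :: "(complex mat \<Rightarrow> complex mat) \<Rightarrow> complex" where
  "det_superop \<phi> = det (superop_matrix \<phi>)"

definition separable :: "nat \<Rightarrow> complex mat \<Rightarrow> bool" where
  "separable n \<sigma> \<longleftrightarrow> (\<exists>m (p :: nat \<Rightarrow> real) A B.
     (\<forall>k<m. p k \<ge> 0 \<and> is_state 2 (A k) \<and> is_state n (B k)) \<and> (\<Sum>k<m. p k) = 1 \<and>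
     \<sigma> = mat (2 * n) (2 * n) (\<lambda>ij. \<Sum>k<m. complex_of_real (p k) * kron (A k) (B k) $$ ij))"

definition entanglement_breaking :: "(complex mat \<Rightarrow> complex mat) \<Rightarrow> bool" where
  "entanglement_breaking \<phi> \<longleftrightarrow>
     (\<forall>n \<rho>. is_state (2 * n) \<rho> \<longrightarrow> separable n (tensor_id \<phi> n \<rho>))"

end

theory Submission
  imports Defs
begin


definition bf :: "(nat \<Rightarrow> nat \<Rightarrow> complex) \<Rightarrow> (nat \<Rightarrow> complex) \<Rightarrow> (nat \<Rightarrow> complex) \<Rightarrow> complex" where
 "bf M x y = cnj (x 0) * M 0 0 * y 0 + cnj (x 0) * M 0 1 * y 1 + cnj (x 1) * M 1 0 * y 0 + cnj (x 1) * M 1 1 * y 1"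

definition herm :: "(nat \<Rightarrow> nat \<Rightarrow> complex) \<Rightarrow> bool" where
 "herm M \<longleftrightarrow> M 1 0 = cnj (M 0 1) \<and> Im (M 0 0) = 0 \<and> Im (M 1 1) = 0"

definition psdf :: "(nat \<Rightarrow> nat \<Rightarrow> complex) \<Rightarrow> bool" where
 "psdf M \<longleftrightarrow> herm M \<and> (\<forall>x. Im (bf M x x) = 0 \<and> 0 \<le> Re (bf M x x))"

lemma real_amgm_aux:
  fixes a c u v m :: real
  assumes "0 \<le> a" "0 \<le> c" "0 \<le> u" "0 \<le> v" "0 \<le> m" "m^2 \<le> a * c"
  shows "2 * u * v * m \<le> a * u^2 + c * v^2"
proof -
  have p: "0 \<le> 4 * u^2 * v^2" by simp
  have "(2 * u * v * m)^2 = (4 * u^2 * v^2) * m^2" by (simp add: power_mult_distrib)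
  also have "\<dots> \<le> (4 * u^2 * v^2) * (a * c)" using mult_left_mono[OF assms(6) p] .
  also have "\<dots> \<le> (a * u^2 + c * v^2)^2"
  proof -
    have "0 \<le> (a * u^2 - c * v^2)^2" by simp
    thus ?thesis by (simp add: power2_eq_square algebra_simps)
  qed
  finally have le: "(2 * u * v * m)^2 \<le> (a * u^2 + c * v^2)^2" .
  have "0 \<le> a * u^2 + c * v^2" using assms by simp
  from power2_le_imp_le[OF le this] show ?thesis .
qed

lemma psd_crit:
  assumes h: "herm M" and a: "0 \<le> Re (M 0 0)" and c: "0 \<le> Re (M 1 1)"
    and d: "(cmod (M 0 1))^2 \<le> Re (M 0 0) * Re (M 1 1)"
  shows "psdf M"
proof -
  have M00: "M 0 0 = of_real (Re (M 0 0))" using h by (simp add: herm_def complex_eq_iff)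
  have M11: "M 1 1 = of_real (Re (M 1 1))" using h by (simp add: herm_def complex_eq_iff)
  have M10: "M 1 0 = cnj (M 0 1)" using h by (simp add: herm_def)
  show ?thesis unfolding psdf_def
  proof (intro conjI allI h)
    fix x :: "nat \<Rightarrow> complex"
    define z where "z = cnj (x 0) * M 0 1 * x 1"
    have e: "bf M x x = of_real (Re (M 0 0) * (cmod (x 0))^2 + Re (M 1 1) * (cmod (x 1))^2 + 2 * Re z)"
    proof -
      have "bf M x x = M 0 0 * (x 0 * cnj (x 0)) + M 1 1 * (x 1 * cnj (x 1)) + (z + cnj z)"
        unfolding bf_def z_def M10 by (simp add: algebra_simps)
      also have "\<dots> = of_real (Re (M 0 0) * (cmod (x 0))^2 + Re (M 1 1) * (cmod (x 1))^2 + 2 * Re z)"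
        by (subst M00, subst M11) (simp add: complex_add_cnj flip: complex_norm_square)
      finally show ?thesis .
    qed
    have "\<bar>Re z\<bar> \<le> cmod z" by (rule abs_Re_le_cmod)
    also have "cmod z = cmod (x 0) * cmod (x 1) * cmod (M 0 1)" unfolding z_def by (simp add: norm_mult)
    finally have "- Re z \<le> cmod (x 0) * cmod (x 1) * cmod (M 0 1)" by linarith
    moreover have "2 * cmod (x 0) * cmod (x 1) * cmod (M 0 1) \<le> Re (M 0 0) * (cmod (x 0))^2 + Re (M 1 1) * (cmod (x 1))^2"
      using real_amgm_aux[OF a c norm_ge_zero norm_ge_zero norm_ge_zero d] by simp
    ultimately show "Im (bf M x x) = 0" "0 \<le> Re (bf M x x)" unfolding e by simp_all
  qed
qed

lemma herm_real: assumes "herm M" shows "cnj (M 0 0) = M 0 0" "cnj (M 1 1) = M 1 1" "cnj (M 0 1) = M 1 0" "cnj (M 1 0) = M 0 1"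
  using assms by (auto simp: herm_def complex_eq_iff)

lemma bf_cnj: assumes "herm M" shows "bf M y x = cnj (bf M x y)"
  using herm_real[OF assms] unfolding bf_def by (simp add: algebra_simps)

lemma bf_real: assumes "herm M" shows "Im (bf M x x) = 0"
proof -
  have "bf M x x = cnj (bf M x x)" by (rule bf_cnj[OF assms])
  hence "Im (bf M x x) = Im (cnj (bf M x x))" by simp
  thus ?thesis by simp
qed

lemma bf_lin_left: "bf M (\<lambda>i. x i + c * y i) z = bf M x z + cnj c * bf M y z"
  unfolding bf_def by (simp only: complex_cnj_add complex_cnj_mult) (simp add: ring_distribs ac_simps)
lemma bf_lin_right: "bf M z (\<lambda>i. x i + c * y i) = bf M z x + c * bf M z y"
  unfolding bf_def by (simp add: ring_distribs ac_simps)
lemma bf_smult_left: "bf M (\<lambda>i. c * y i) z = cnj c * bf M y z"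
  unfolding bf_def by (simp only: complex_cnj_add complex_cnj_mult) (simp add: ring_distribs ac_simps)
lemma bf_smult_right: "bf M z (\<lambda>i. c * y i) = c * bf M z y"
  unfolding bf_def by (simp add: ring_distribs ac_simps)

definition Fs where
  "Fs A B D x1 x2 y1 y2 = bf A x1 y1 + bf B x1 y2 + bf B x2 y1 + bf D x2 y2"

lemma Fs_lin_left: "Fs A B D (\<lambda>i. x1 i + c * y1 i) (\<lambda>i. x2 i + c * y2 i) u1 u2
   = Fs A B D x1 x2 u1 u2 + cnj c * Fs A B D y1 y2 u1 u2"
  unfolding Fs_def bf_lin_left by (simp add: ring_distribs ac_simps)
lemma Fs_lin_right: "Fs A B D u1 u2 (\<lambda>i. x1 i + c * y1 i) (\<lambda>i. x2 i + c * y2 i)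
   = Fs A B D u1 u2 x1 x2 + c * Fs A B D u1 u2 y1 y2"
  unfolding Fs_def bf_lin_right by (simp add: ring_distribs ac_simps)
lemma Fs_smult_right: "Fs A B D u1 u2 (\<lambda>i. c * y1 i) (\<lambda>i. c * y2 i) = c * Fs A B D u1 u2 y1 y2"
  unfolding Fs_def bf_smult_right by (simp add: ring_distribs ac_simps)
lemma Fs_cnj: assumes "herm A" "herm B" "herm D"
  shows "Fs A B D y1 y2 x1 x2 = cnj (Fs A B D x1 x2 y1 y2)"
  unfolding Fs_def bf_cnj[OF assms(1), of y1 x1] bf_cnj[OF assms(2), of y1 x2] bf_cnj[OF assms(2), of y2 x1] bf_cnj[OF assms(3), of y2 x2] by simp

lemma quad0: fixes a b :: real assumes "\<forall>t. 0 \<le> t*t*a + t*b" shows "b = 0"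
proof (rule ccontr)
  assume b: "b \<noteq> 0"
  define s where "s = 1 / (\<bar>a\<bar> + 1)"
  have s0: "0 < s" unfolding s_def by simp
  have "s * \<bar>a\<bar> < 1" unfolding s_def by simp
  moreover have "s * a \<le> s * \<bar>a\<bar>" using s0 by simp
  ultimately have sa: "s * a - 1 < 0" by linarith
  have e: "(-b*s)*(-b*s)*a + (-b*s)*b = b^2 * s * (s*a - 1)" by (simp add: power2_eq_square algebra_simps)
  have "0 < b^2 * s" using b s0 by simp
  hence "b^2 * s * (s*a - 1) < 0" using sa by (simp add: mult_pos_neg)
  moreover have "0 \<le> (-b*s)*(-b*s)*a + (-b*s)*b" using assms by blast
  ultimately show False unfolding e by linarith
qed

lemma Kl:
  assumes h: "herm A" "herm B" "herm D"
    and pos: "\<forall>x1 x2. 0 \<le> Re (Fs A B D x1 x2 x1 x2)"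
    and z: "Fs A B D x1 x2 x1 x2 = 0"
  shows "Fs A B D x1 x2 y1 y2 = 0"
proof -
  have re0: "Re (Fs A B D x1 x2 u1 u2) = 0" for u1 u2
  proof -
    have "\<forall>t::real. 0 \<le> t*t*Re (Fs A B D u1 u2 u1 u2) + t * (2 * Re (Fs A B D x1 x2 u1 u2))"
    proof
      fix t :: real
      have e: "Fs A B D (\<lambda>i. x1 i + of_real t * u1 i) (\<lambda>i. x2 i + of_real t * u2 i)
                 (\<lambda>i. x1 i + of_real t * u1 i) (\<lambda>i. x2 i + of_real t * u2 i)
         = Fs A B D x1 x2 x1 x2 + of_real t * Fs A B D x1 x2 u1 u2
           + of_real t * Fs A B D u1 u2 x1 x2 + of_real t * of_real t * Fs A B D u1 u2 u1 u2"
        unfolding Fs_lin_left Fs_lin_right by (simp add: algebra_simps)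
      have c: "Fs A B D u1 u2 x1 x2 = cnj (Fs A B D x1 x2 u1 u2)" by (rule Fs_cnj[OF h])
      have "0 \<le> Re (Fs A B D (\<lambda>i. x1 i + of_real t * u1 i) (\<lambda>i. x2 i + of_real t * u2 i)
                 (\<lambda>i. x1 i + of_real t * u1 i) (\<lambda>i. x2 i + of_real t * u2 i))" using pos by blast
      thus "0 \<le> t*t*Re (Fs A B D u1 u2 u1 u2) + t * (2 * Re (Fs A B D x1 x2 u1 u2))"
        unfolding e c z by (simp add: algebra_simps)
    qed
    from quad0[OF this] show ?thesis by simp
  qed
  have "Re (Fs A B D x1 x2 (\<lambda>i. \<i> * y1 i) (\<lambda>i. \<i> * y2 i)) = 0" by (rule re0)
  hence "Im (Fs A B D x1 x2 y1 y2) = 0" unfolding Fs_smult_right by simp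
  moreover have "Re (Fs A B D x1 x2 y1 y2) = 0" by (rule re0)
  ultimately show ?thesis by (simp add: complex_eq_iff)
qed


lemma psd_crit2:
  assumes h: "herm M" and t: "0 \<le> Re (M 0 0) + Re (M 1 1)"
    and d: "(cmod (M 0 1))^2 \<le> Re (M 0 0) * Re (M 1 1)"
  shows "psdf M"
proof -
  have p: "0 \<le> Re (M 0 0) * Re (M 1 1)" using d by (meson order_trans zero_le_power2)
  have "0 \<le> Re (M 0 0) \<and> 0 \<le> Re (M 1 1)"
  proof (rule ccontr)
    assume "\<not> (0 \<le> Re (M 0 0) \<and> 0 \<le> Re (M 1 1))"
    then consider "Re (M 0 0) < 0" | "Re (M 1 1) < 0" by linarith
    thus False
    proof cases
      case 1 with p have "Re (M 1 1) \<le> 0" by (simp add: zero_le_mult_iff)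
      with 1 t show False by linarith
    next
      case 2 with p have "Re (M 0 0) \<le> 0" by (simp add: zero_le_mult_iff)
      with 2 t show False by linarith
    qed
  qed
  thus ?thesis using psd_crit[OF h _ _ d] by blast
qed

lemma bf_mscale: "bf (\<lambda>i j. M i j * k) x y = k * bf M x y"
  unfolding bf_def by (simp add: ring_distribs ac_simps)

lemma psdf_scale:
  assumes "psdf M" "0 \<le> s"
  shows "psdf (\<lambda>i j. M i j * of_real s)"
proof -
  have h: "herm (\<lambda>i j. M i j * of_real s)" using assms unfolding psdf_def herm_def by simp
  show ?thesis unfolding psdf_def
  proof (intro conjI allI h)
    fix x
    show "Im (bf (\<lambda>i j. M i j * of_real s) x x) = 0" "0 \<le> Re (bf (\<lambda>i j. M i j * of_real s) x x)"
      unfolding bf_mscale using assms unfolding psdf_def by simp_all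
  qed
qed

lemma psdf_zero: "psdf (\<lambda>i j. 0)"
  unfolding psdf_def herm_def bf_def by simp

lemma bf_zero_left: "bf M (\<lambda>i. 0) y = 0" unfolding bf_def by simp
lemma bf_zero_right: "bf M x (\<lambda>i. 0) = 0" unfolding bf_def by simp

definition e0 :: "nat \<Rightarrow> complex" where "e0 = (\<lambda>i. if i = 0 then 1 else 0)"
definition e1 :: "nat \<Rightarrow> complex" where "e1 = (\<lambda>i. if i = 1 then 1 else 0)"

lemma bf_e: "bf M e0 e0 = M 0 0" "bf M e0 e1 = M 0 1" "bf M e1 e0 = M 1 0" "bf M e1 e1 = M 1 1"
  "bf M x e0 = cnj (x 0) * M 0 0 + cnj (x 1) * M 1 0" "bf M x e1 = cnj (x 0) * M 0 1 + cnj (x 1) * M 1 1"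
  unfolding bf_def e0_def e1_def by simp_all

lemma traceless_kill:
  assumes h: "herm N" and t: "Re (N 0 0) + Re (N 1 1) = 0"
    and k0: "bf N x e0 = 0" and k1: "bf N x e1 = 0" and nz: "x 0 \<noteq> 0 \<or> x 1 \<noteq> 0"
  shows "N 0 0 = 0 \<and> N 0 1 = 0 \<and> N 1 0 = 0 \<and> N 1 1 = 0"
proof -
  define n where "n = N 0 0"
  define q where "q = N 0 1"
  have N00: "N 0 0 = n" and N11: "N 1 1 = - n" and N10: "N 1 0 = cnj q" and N01: "N 0 1 = q"
    using h t unfolding herm_def n_def q_def by (auto simp: complex_eq_iff)
  have E1: "cnj (x 0) * n + cnj (x 1) * cnj q = 0" using k0 unfolding bf_e N00 N10 .
  have E2: "cnj (x 0) * q - cnj (x 1) * n = 0" using k1 unfolding bf_e N01 N11 by simp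
  have u: "cnj (x 0) * (n*n + q * cnj q) = 0"
  proof -
    have "cnj (x 0) * (n*n + q * cnj q) = n * (cnj (x 0) * n + cnj (x 1) * cnj q) + cnj q * (cnj (x 0) * q - cnj (x 1) * n)"
      by (simp add: algebra_simps)
    thus ?thesis using E1 E2 by simp
  qed
  have v: "cnj (x 1) * (n*n + q * cnj q) = 0"
  proof -
    have "cnj (x 1) * (n*n + q * cnj q) = q * (cnj (x 0) * n + cnj (x 1) * cnj q) - n * (cnj (x 0) * q - cnj (x 1) * n)"
      by (simp add: algebra_simps)
    thus ?thesis using E1 E2 by simp
  qed
  have s: "n*n + q * cnj q = 0" using u v nz by auto
  have nr: "n = of_real (Re n)" using h unfolding herm_def n_def by (simp add: complex_eq_iff)
  have qq: "q * cnj q = of_real ((cmod q)^2)" by (rule complex_norm_square[symmetric])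
  have nn: "n * n = of_real ((Re n)^2)" by (subst (1 2) nr) (simp add: power2_eq_square)
  have "of_real ((Re n)^2 + (cmod q)^2) = n*n + q * cnj q" unfolding qq nn by simp
  hence "(Re n)^2 + (cmod q)^2 = 0" using s by (metis of_real_eq_0_iff)
  hence "Re n = 0" "cmod q = 0" by (auto simp: add_nonneg_eq_0_iff)
  hence "n = 0" "q = 0" using nr by auto
  thus ?thesis using N00 N01 N10 N11 by simp
qed


definition decomp where
  "decomp A B D \<longleftrightarrow> (\<exists>b1 b2 :: real. \<exists>Q1 Q2 R. psdf Q1 \<and> psdf Q2 \<and> psdf R \<and>
     (\<forall>i<2. \<forall>j<2. A i j = Q1 i j + Q2 i j \<and> B i j = of_real b1 * Q1 i j + of_real b2 * Q2 i j
        \<and> D i j = of_real b1 * of_real b1 * Q1 i j + of_real b2 * of_real b2 * Q2 i j + R i j))"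

lemma less2_cases: "(i::nat) < 2 \<Longrightarrow> i = 0 \<or> i = 1" by auto

lemma psdA_of:
  assumes h: "herm A" "herm B" "herm D"
    and pos: "\<forall>x1 x2. 0 \<le> Re (Fs A B D x1 x2 x1 x2)"
  shows "psdf A" "psdf D"
proof -
  show "psdf A" unfolding psdf_def
  proof (intro conjI allI h(1))
    fix x
    show "Im (bf A x x) = 0" by (rule bf_real[OF h(1)])
    have "0 \<le> Re (Fs A B D x (\<lambda>i. 0) x (\<lambda>i. 0))" using pos by blast
    thus "0 \<le> Re (bf A x x)" unfolding Fs_def bf_zero_left bf_zero_right by simp
  qed
  show "psdf D" unfolding psdf_def
  proof (intro conjI allI h(3))
    fix x
    show "Im (bf D x x) = 0" by (rule bf_real[OF h(3)])
    have "0 \<le> Re (Fs A B D (\<lambda>i. 0) x (\<lambda>i. 0) x)" using pos by blast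
    thus "0 \<le> Re (bf D x x)" unfolding Fs_def bf_zero_left bf_zero_right by simp
  qed
qed

lemma single:
  assumes h: "herm A" "herm B" "herm D"
    and pos: "\<forall>x1 x2. 0 \<le> Re (Fs A B D x1 x2 x1 x2)"
    and bc: "\<forall>i<2. \<forall>j<2. B i j = of_real c * A i j"
  shows "decomp A B D"
proof -
  have b: "B 0 0 = of_real c * A 0 0" "B 0 1 = of_real c * A 0 1" "B 1 0 = of_real c * A 1 0" "B 1 1 = of_real c * A 1 1"
    using bc by auto
  define R where "R = (\<lambda>i j. D i j - of_real c * of_real c * A i j)"
  have hR: "herm R" using h unfolding herm_def R_def by simp
  have eq: "bf R y y = Fs A B D (\<lambda>i. - of_real c * y i) y (\<lambda>i. - of_real c * y i) y" for y
    unfolding Fs_def bf_def R_def b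
    by (simp only: complex_cnj_mult complex_cnj_minus complex_cnj_complex_of_real) (simp add: algebra_simps)
  have pR: "psdf R" unfolding psdf_def
  proof (intro conjI allI hR)
    fix y
    show "Im (bf R y y) = 0" by (rule bf_real[OF hR])
    show "0 \<le> Re (bf R y y)" unfolding eq using pos by blast
  qed
  show ?thesis unfolding decomp_def
    apply (rule exI[of _ c], rule exI[of _ c], rule exI[of _ A], rule exI[of _ "\<lambda>i j. 0"], rule exI[of _ R])
    using psdA_of[OF h pos] psdf_zero pR bc unfolding R_def by auto
qed


lemma core_pd:
  assumes h: "herm A" "herm B" "herm D"
    and pos: "\<forall>x1 x2. 0 \<le> Re (Fs A B D x1 x2 x1 x2)"
    and a0p: "0 < Re (A 0 0)"
    and dAp: "0 < Re (A 0 0) * Re (A 1 1) - (cmod (A 0 1))^2"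
    and pc: "(Re (B 0 0) - c * Re (A 0 0)) * (Re (B 1 1) - c * Re (A 1 1)) - (cmod (B 0 1 - of_real c * A 0 1))^2 < 0"
    and cdef: "c * (Re (A 0 0) + Re (A 1 1)) = Re (B 0 0) + Re (B 1 1)"
  shows "decomp A B D"
proof -
  define a0 where "a0 = Re (A 0 0)"
  define a1 where "a1 = Re (A 1 1)"
  define ar where "ar = Re (A 0 1)"
  define ai where "ai = Im (A 0 1)"
  define b0 where "b0 = Re (B 0 0)"
  define b1 where "b1 = Re (B 1 1)"
  define br where "br = Re (B 0 1)"
  define bi where "bi = Im (B 0 1)"
  have A00: "A 0 0 = of_real a0" and A11: "A 1 1 = of_real a1" and A01: "A 0 1 = Complex ar ai"
    and A10: "A 1 0 = Complex ar (- ai)"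
    using h(1) unfolding herm_def a0_def a1_def ar_def ai_def by (auto simp: complex_eq_iff)
  have B00: "B 0 0 = of_real b0" and B11: "B 1 1 = of_real b1" and B01: "B 0 1 = Complex br bi"
    and B10: "B 1 0 = Complex br (- bi)"
    using h(2) unfolding herm_def b0_def b1_def br_def bi_def by (auto simp: complex_eq_iff)
  define dA where "dA = a0*a1 - ar^2 - ai^2"
  define tau where "tau = a0*b1 + a1*b0 - 2*(ar*br + ai*bi)"
  define dB where "dB = b0*b1 - br^2 - bi^2"
  define p where "p = (\<lambda>t::real. (b0 - t*a0)*(b1 - t*a1) - (br - t*ar)^2 - (bi - t*ai)^2)"
  have cmA: "(cmod (A 0 1))^2 = ar^2 + ai^2" unfolding A01 by (simp add: cmod_power2)
  have dA0: "0 < dA" using dAp unfolding dA_def cmA a0_def[symmetric] a1_def[symmetric] by simp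
  have a00: "0 < a0" using a0p a0_def by simp
  have a10: "0 < a1"
  proof -
    have "0 < a0 * a1" using dA0 unfolding dA_def by (smt (verit) zero_le_power2)
    thus ?thesis using a00 by (simp add: zero_less_mult_iff)
  qed
  have p_eq: "p t = dA*t^2 - tau*t + dB" for t
    unfolding p_def dA_def tau_def dB_def by (simp add: power2_eq_square algebra_simps)
  have cmBc: "(cmod (B 0 1 - of_real c * A 0 1))^2 = (br - c*ar)^2 + (bi - c*ai)^2"
    unfolding A01 B01 by (simp add: cmod_power2)
  have pc': "p c < 0" using pc unfolding p_def cmBc a0_def[symmetric] a1_def[symmetric] b0_def[symmetric] b1_def[symmetric] by simp
  define Dl where "Dl = tau^2 - 4*dA*dB"
  have "4*dA*p c = (2*dA*c - tau)^2 - Dl" unfolding p_eq Dl_def by (simp add: power2_eq_square algebra_simps)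
  moreover have "4*dA*p c < 0" using pc' dA0 by (simp add: mult_pos_neg)
  ultimately have Dl0: "0 < Dl" by (smt (verit) zero_le_power2)
  define sq where "sq = sqrt Dl"
  have sq0: "0 < sq" unfolding sq_def using Dl0 by simp
  have sq2: "sq * sq = Dl" unfolding sq_def using Dl0 by simp
  define t1 where "t1 = (tau - sq) / (2*dA)"
  define t2 where "t2 = (tau + sq) / (2*dA)"
  have s12: "t1 + t2 = tau / dA" unfolding t1_def t2_def using dA0 by (simp add: field_simps)
  have p12: "t1 * t2 = dB / dA"
  proof -
    have "t1 * t2 = (tau*tau - sq*sq) / (4*dA*dA)" unfolding t1_def t2_def using dA0
      by (simp add: field_simps)
    also have "\<dots> = dB / dA" unfolding sq2 Dl_def using dA0 by (simp add: field_simps power2_eq_square)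
    finally show ?thesis .
  qed
  have pfac: "p t = dA * (t - t1) * (t - t2)" for t
  proof -
    have "dA * (t - t1) * (t - t2) = dA*t^2 - dA*t*(t1+t2) + dA*(t1*t2)" by (simp add: power2_eq_square algebra_simps)
    also have "\<dots> = dA*t^2 - tau*t + dB" unfolding s12 p12 using dA0 by simp
    finally show ?thesis unfolding p_eq by simp
  qed
  have t12: "t1 < t2" unfolding t1_def t2_def using sq0 dA0 by (simp add: divide_strict_right_mono)
  have "dA * ((c - t1) * (c - t2)) < 0" using pc' unfolding pfac by (simp add: mult.assoc)
  hence "(c - t1) * (c - t2) < 0" using dA0 by (simp add: mult_less_0_iff)
  hence ct: "t1 < c" "c < t2" using t12 by (auto simp: mult_less_0_iff)
  have pt1: "p t1 = 0" and pt2: "p t2 = 0" unfolding pfac by simp_all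
  have cd': "c * (a0 + a1) = b0 + b1" using cdef unfolding a0_def a1_def b0_def b1_def .
  define M2 where "M2 = (\<lambda>i j. B i j - of_real t1 * A i j)"
  define M1 where "M1 = (\<lambda>i j. of_real t2 * A i j - B i j)"
  have hM2: "herm M2" using h unfolding herm_def M2_def by simp
  have hM1: "herm M1" using h unfolding herm_def M1_def by simp
  have psM2: "psdf M2"
  proof (rule psd_crit2[OF hM2])
    have "Re (M2 0 0) + Re (M2 1 1) = (a0 + a1) * (c - t1)"
      unfolding M2_def A00 A11 B00 B11 using cd' by (simp add: algebra_simps)
    thus "0 \<le> Re (M2 0 0) + Re (M2 1 1)" using ct a00 a10 by simp
    have "(cmod (M2 0 1))^2 = (br - t1*ar)^2 + (bi - t1*ai)^2" unfolding M2_def A01 B01 by (simp add: cmod_power2)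
    moreover have "Re (M2 0 0) * Re (M2 1 1) = (b0 - t1*a0)*(b1 - t1*a1)" unfolding M2_def A00 A11 B00 B11 by simp
    ultimately show "(cmod (M2 0 1))^2 \<le> Re (M2 0 0) * Re (M2 1 1)" using pt1 unfolding p_def by simp
  qed
  have psM1: "psdf M1"
  proof (rule psd_crit2[OF hM1])
    have "Re (M1 0 0) + Re (M1 1 1) = (a0 + a1) * (t2 - c)"
      unfolding M1_def A00 A11 B00 B11 using cd' by (simp add: algebra_simps)
    thus "0 \<le> Re (M1 0 0) + Re (M1 1 1)" using ct a00 a10 by simp
    have "(cmod (M1 0 1))^2 = (br - t2*ar)^2 + (bi - t2*ai)^2" unfolding M1_def A01 B01 cmod_power2 by (simp add: power2_eq_square algebra_simps)
    moreover have "Re (M1 0 0) * Re (M1 1 1) = (b0 - t2*a0)*(b1 - t2*a1)" unfolding M1_def A00 A11 B00 B11 by (simp add: algebra_simps)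
    ultimately show "(cmod (M1 0 1))^2 \<le> Re (M1 0 0) * Re (M1 1 1)" using pt2 unfolding p_def by simp
  qed
  define K where "K = 1 / (t2 - t1)"
  have K0: "0 \<le> K" unfolding K_def using t12 by simp
  have kkr: "t2 * K - t1 * K = 1"
  proof -
    have "t2 * K - t1 * K = (t2 - t1) * K" by (simp add: algebra_simps)
    thus ?thesis unfolding K_def using t12 by simp
  qed
  have kk: "of_real t2 * of_real K - of_real t1 * of_real K = (1::complex)"
    using arg_cong[OF kkr, of "of_real :: real \<Rightarrow> complex"] by simp
  define Q1 where "Q1 = (\<lambda>i j. M1 i j * of_real K)"
  define Q2 where "Q2 = (\<lambda>i j. M2 i j * of_real K)"
  define R where "R = (\<lambda>i j. D i j - of_real (t1 + t2) * B i j + of_real (t1 * t2) * A i j)"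
  have pQ1: "psdf Q1" unfolding Q1_def by (rule psdf_scale[OF psM1 K0])
  have pQ2: "psdf Q2" unfolding Q2_def by (rule psdf_scale[OF psM2 K0])
  have idA: "A i j = Q1 i j + Q2 i j" for i j
  proof -
    have "Q1 i j + Q2 i j = A i j * (of_real t2 * of_real K - of_real t1 * of_real K)"
      unfolding Q1_def Q2_def M1_def M2_def by (simp add: algebra_simps)
    thus ?thesis unfolding kk by simp
  qed
  have idB: "B i j = of_real t1 * Q1 i j + of_real t2 * Q2 i j" for i j
  proof -
    have "of_real t1 * Q1 i j + of_real t2 * Q2 i j = B i j * (of_real t2 * of_real K - of_real t1 * of_real K)"
      unfolding Q1_def Q2_def M1_def M2_def by (simp add: algebra_simps)
    thus ?thesis unfolding kk by simp
  qed
  have idD: "D i j = of_real t1 * of_real t1 * Q1 i j + of_real t2 * of_real t2 * Q2 i j + R i j" for i j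
  proof -
    have "of_real t1 * of_real t1 * Q1 i j + of_real t2 * of_real t2 * Q2 i j
       = (of_real t2 * of_real K - of_real t1 * of_real K) * ((of_real t1 + of_real t2) * B i j - of_real t1 * of_real t2 * A i j)"
      unfolding Q1_def Q2_def M1_def M2_def by (simp add: algebra_simps)
    thus ?thesis unfolding kk R_def of_real_add of_real_mult by simp
  qed
  have hR: "herm R" using h unfolding herm_def R_def by simp
  \<comment> \<open>Schur complement argument\<close>
  define dAc where "dAc = A 0 0 * A 1 1 - A 0 1 * A 1 0"
  define tauc where "tauc = A 0 0 * B 1 1 + A 1 1 * B 0 0 - A 0 1 * B 1 0 - A 1 0 * B 0 1"
  define dBc where "dBc = B 0 0 * B 1 1 - B 0 1 * B 1 0"
  have dAc: "dAc = of_real dA" unfolding dAc_def dA_def A00 A11 A01 A10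
    by (simp add: complex_eq_iff power2_eq_square)
  have tauc: "tauc = of_real tau" unfolding tauc_def tau_def A00 A11 A01 A10 B00 B11 B01 B10
    by (simp add: complex_eq_iff algebra_simps)
  have dBc: "dBc = of_real dB" unfolding dBc_def dB_def B00 B11 B01 B10
    by (simp add: complex_eq_iff power2_eq_square)
  have dAc0: "dAc \<noteq> 0" using dA0 dAc by simp
  have cdA: "cnj dAc = dAc" unfolding dAc by simp
  have sumc: "of_real (t1 + t2) = tauc / dAc" unfolding s12 tauc dAc by simp
  have prodc: "of_real (t1 * t2) = dBc / dAc" unfolding p12 dBc dAc by simp
  have pR: "psdf R" unfolding psdf_def
  proof (intro conjI allI hR)
    fix y :: "nat \<Rightarrow> complex"
    show "Im (bf R y y) = 0" by (rule bf_real[OF hR])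
    define w where "w = (\<lambda>i::nat. B i 0 * y 0 + B i 1 * y 1)"
    define x where "x = (\<lambda>i::nat. if i = 0 then - (A 1 1 * w 0 - A 0 1 * w 1) / dAc else - (A 0 0 * w 1 - A 1 0 * w 0) / dAc)"
    have x0: "x 0 = - (A 1 1 * w 0 - A 0 1 * w 1) / dAc" and x1: "x 1 = - (A 0 0 * w 1 - A 1 0 * w 0) / dAc"
      unfolding x_def by simp_all
    have dx0: "dAc * x 0 = - (A 1 1 * w 0 - A 0 1 * w 1)" unfolding x0 using dAc0 by simp
    have dx1: "dAc * x 1 = - (A 0 0 * w 1 - A 1 0 * w 0)" unfolding x1 using dAc0 by simp
    have "dAc * (A 0 0 * x 0 + A 0 1 * x 1) = A 0 0 * (dAc * x 0) + A 0 1 * (dAc * x 1)" by (simp add: algebra_simps)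
    also have "\<dots> = dAc * (- w 0)" unfolding dx0 dx1 unfolding dAc_def by (simp add: algebra_simps)
    finally have "dAc * (A 0 0 * x 0 + A 0 1 * x 1) = dAc * (- w 0)" .
    hence C1a: "A 0 0 * x 0 + A 0 1 * x 1 = - w 0" using mult_left_cancel[OF dAc0] by blast
    have "dAc * (A 1 0 * x 0 + A 1 1 * x 1) = A 1 0 * (dAc * x 0) + A 1 1 * (dAc * x 1)" by (simp add: algebra_simps)
    also have "\<dots> = dAc * (- w 1)" unfolding dx0 dx1 unfolding dAc_def by (simp add: algebra_simps)
    finally have "dAc * (A 1 0 * x 0 + A 1 1 * x 1) = dAc * (- w 1)" .
    hence C1b: "A 1 0 * x 0 + A 1 1 * x 1 = - w 1" using mult_left_cancel[OF dAc0] by blast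
    have bAxx: "bf A x x = cnj (x 0) * (A 0 0 * x 0 + A 0 1 * x 1) + cnj (x 1) * (A 1 0 * x 0 + A 1 1 * x 1)"
      unfolding bf_def by (simp add: algebra_simps)
    have bBxy: "bf B x y = cnj (x 0) * w 0 + cnj (x 1) * w 1" unfolding bf_def w_def by (simp add: algebra_simps)
    have C2: "bf A x x = - bf B x y" unfolding bAxx C1a C1b bBxy by (simp add: algebra_simps)
    have rA: "cnj (bf A x x) = bf A x x" using bf_real[OF h(1), of x] by (simp add: complex_eq_iff)
    have C4: "Fs A B D x y x y = bf D y y - bf A x x"
    proof -
      have "Fs A B D x y x y = bf A x x + bf B x y + cnj (bf B x y) + bf D y y"
        unfolding Fs_def bf_cnj[OF h(2), of y x] by simp
      also have "\<dots> = bf D y y - cnj (bf A x x)" using C2 by simp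
      finally show ?thesis unfolding rA .
    qed
    have hr: "cnj (A 0 0) = A 0 0" "cnj (A 1 1) = A 1 1" "cnj (A 0 1) = A 1 0" "cnj (A 1 0) = A 0 1"
      using herm_real[OF h(1)] by simp_all
    have hrB: "cnj (B 0 0) = B 0 0" "cnj (B 1 1) = B 1 1" "cnj (B 0 1) = B 1 0" "cnj (B 1 0) = B 0 1"
      using herm_real[OF h(2)] by simp_all
    have cx0: "cnj (x 0) = - (A 1 1 * cnj (w 0) - A 1 0 * cnj (w 1)) / dAc"
      unfolding x0 using hr cdA by simp
    have cx1: "cnj (x 1) = - (A 0 0 * cnj (w 1) - A 0 1 * cnj (w 0)) / dAc"
      unfolding x1 using hr cdA by simp
    have cw0: "cnj (w 0) = B 0 0 * cnj (y 0) + B 1 0 * cnj (y 1)" unfolding w_def using hrB by simp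
    have cw1: "cnj (w 1) = B 0 1 * cnj (y 0) + B 1 1 * cnj (y 1)" unfolding w_def using hrB by simp
    have dcx0: "dAc * cnj (x 0) = - (A 1 1 * cnj (w 0) - A 1 0 * cnj (w 1))" unfolding cx0 using dAc0 by simp
    have dcx1: "dAc * cnj (x 1) = - (A 0 0 * cnj (w 1) - A 0 1 * cnj (w 0))" unfolding cx1 using dAc0 by simp
    have C5a: "dAc * bf A x x = (A 1 1 * cnj (w 0) - A 1 0 * cnj (w 1)) * w 0 + (A 0 0 * cnj (w 1) - A 0 1 * cnj (w 0)) * w 1"
    proof -
      have "dAc * bf A x x = - ((dAc * cnj (x 0)) * w 0 + (dAc * cnj (x 1)) * w 1)" unfolding C2 bBxy by (simp add: algebra_simps)
      thus ?thesis unfolding dcx0 dcx1 by (simp add: algebra_simps)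
    qed
    have C5b: "(A 1 1 * cnj (w 0) - A 1 0 * cnj (w 1)) * w 0 + (A 0 0 * cnj (w 1) - A 0 1 * cnj (w 0)) * w 1
       = tauc * bf B y y - dBc * bf A y y"
      unfolding cw0 cw1 unfolding w_def tauc_def dBc_def bf_def by (simp add: algebra_simps)
    have C5: "bf A x x = (tauc * bf B y y - dBc * bf A y y) / dAc"
      using C5a C5b dAc0 by (simp add: eq_divide_eq mult.commute)
    have C6: "bf R y y = bf D y y - of_real (t1 + t2) * bf B y y + of_real (t1 * t2) * bf A y y"
      unfolding R_def bf_def by (simp add: algebra_simps)
    have "bf R y y = Fs A B D x y x y" unfolding C6 C4 C5 sumc prodc using dAc0
      by (simp add: diff_divide_distrib algebra_simps)
    thus "0 \<le> Re (bf R y y)" using pos by simp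
  qed
  show ?thesis unfolding decomp_def
    apply (rule exI[of _ t1], rule exI[of _ t2], rule exI[of _ Q1], rule exI[of _ Q2], rule exI[of _ R])
    using pQ1 pQ2 pR idA idB idD by blast
qed


lemma bf_N: "bf (\<lambda>i j. B i j - of_real c * A i j) x y = bf B x y - of_real c * bf A x y"
  unfolding bf_def by (simp add: ring_distribs ac_simps)

lemma core:
  assumes h: "herm A" "herm B" "herm D"
    and pos: "\<forall>x1 x2. 0 \<le> Re (Fs A B D x1 x2 x1 x2)"
  shows "decomp A B D"
proof -
  have pA: "psdf A" using psdA_of[OF h pos] by simp
  have a0: "0 \<le> Re (A 0 0)" using pA unfolding psdf_def by (metis bf_e(1))
  have a1: "0 \<le> Re (A 1 1)" using pA unfolding psdf_def by (metis bf_e(4))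
  define z :: "nat \<Rightarrow> complex" where "z = (\<lambda>i. 0)"
  have Fz: "Fs A B D x z y1 y2 = bf A x y1 + bf B x y2" for x y1 y2
    unfolding Fs_def z_def bf_zero_left by simp
  have Fzz: "Fs A B D x z x z = bf A x x" for x
    unfolding Fs_def z_def bf_zero_left bf_zero_right by simp
  have kill: "bf A x y = 0 \<and> bf B x y = 0" if "bf A x x = 0" for x y
  proof -
    have k: "Fs A B D x z y1 y2 = 0" for y1 y2
      by (rule Kl[OF h pos]) (use that Fzz in simp)
    show ?thesis using k[of y z] k[of z y] unfolding Fs_def z_def bf_zero_left bf_zero_right by simp
  qed
  show ?thesis
  proof (cases "Re (A 0 0) + Re (A 1 1) = 0")
    case True
    hence "Re (A 0 0) = 0" "Re (A 1 1) = 0" using a0 a1 by linarith+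
    hence A0: "A 0 0 = 0" "A 1 1 = 0" using h(1) unfolding herm_def by (auto simp: complex_eq_iff)
    have kA0: "bf A e0 e0 = 0" using A0 by (simp only: bf_e(1))
    have kA1: "bf A e1 e1 = 0" using A0 by (simp only: bf_e(4))
    have "B 0 0 = 0" using conjunct2[OF kill[OF kA0, of e0]] unfolding bf_e(1) .
    moreover have "B 0 1 = 0" using conjunct2[OF kill[OF kA0, of e1]] unfolding bf_e(2) .
    moreover have "B 1 0 = 0" using conjunct2[OF kill[OF kA1, of e0]] unfolding bf_e(3) .
    moreover have "B 1 1 = 0" using conjunct2[OF kill[OF kA1, of e1]] unfolding bf_e(4) .
    ultimately have "\<forall>i<2. \<forall>j<2. B i j = of_real 0 * A i j" by (auto dest!: less2_cases)
    thus ?thesis by (rule single[OF h pos])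
  next
    case False
    hence tr: "0 < Re (A 0 0) + Re (A 1 1)" using a0 a1 by linarith
    define c where "c = (Re (B 0 0) + Re (B 1 1)) / (Re (A 0 0) + Re (A 1 1))"
    have cdef: "c * (Re (A 0 0) + Re (A 1 1)) = Re (B 0 0) + Re (B 1 1)" unfolding c_def using tr by simp
    define N where "N = (\<lambda>i j. B i j - of_real c * A i j)"
    have hN: "herm N" using h unfolding herm_def N_def by simp
    have trN: "Re (N 0 0) + Re (N 1 1) = 0" unfolding N_def using cdef by (simp add: algebra_simps)
    have fin: "decomp A B D" if "N 0 0 = 0 \<and> N 0 1 = 0 \<and> N 1 0 = 0 \<and> N 1 1 = 0"
    proof (rule single[OF h pos, of c])
      show "\<forall>i<2. \<forall>j<2. B i j = of_real c * A i j" using that unfolding N_def by (auto dest!: less2_cases)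
    qed
    show ?thesis
    proof (cases "0 < Re (A 0 0) \<and> 0 < Re (A 0 0) * Re (A 1 1) - (cmod (A 0 1))^2")
      case PD: True
      show ?thesis
      proof (cases "(Re (B 0 0) - c * Re (A 0 0)) * (Re (B 1 1) - c * Re (A 1 1)) - (cmod (B 0 1 - of_real c * A 0 1))^2 < 0")
        case True
        show ?thesis by (rule core_pd[OF h pos _ _ True cdef]) (use PD in auto)
      next
        case False
        have e: "(Re (B 0 0) - c * Re (A 0 0)) * (Re (B 1 1) - c * Re (A 1 1)) - (cmod (B 0 1 - of_real c * A 0 1))^2
           = 0 - (Re (N 0 0))^2 - (cmod (N 0 1))^2"
        proof -
          have n11: "Re (N 1 1) = - Re (N 0 0)" using trN by simp
          have "(Re (B 0 0) - c * Re (A 0 0)) * (Re (B 1 1) - c * Re (A 1 1)) - (cmod (B 0 1 - of_real c * A 0 1))^2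
             = Re (N 0 0) * Re (N 1 1) - (cmod (N 0 1))^2" unfolding N_def by simp
          also have "\<dots> = 0 - (Re (N 0 0))^2 - (cmod (N 0 1))^2" unfolding n11 by (simp add: power2_eq_square)
          finally show ?thesis .
        qed
        have "(Re (N 0 0))^2 + (cmod (N 0 1))^2 \<le> 0" using False unfolding e by simp
        hence "Re (N 0 0) = 0" "cmod (N 0 1) = 0"
          by (smt (verit) zero_le_power2 zero_eq_power2)+
        hence "N 0 0 = 0" "N 0 1 = 0" using hN unfolding herm_def by (auto simp: complex_eq_iff)
        moreover hence "N 1 0 = 0" "N 1 1 = 0" using hN trN unfolding herm_def by (auto simp: complex_eq_iff)
        ultimately show ?thesis using fin by simp
      qed
    next
      case nPD: False
      obtain x where x0: "bf A x x = 0" and xnz: "x 0 \<noteq> 0 \<or> x 1 \<noteq> 0"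
      proof (cases "Re (A 0 0) = 0")
        case True
        have "A 0 0 = 0" using True h(1) unfolding herm_def by (simp add: complex_eq_iff)
        thus ?thesis using that[of e0] unfolding bf_e by (simp add: e0_def)
      next
        case False
        hence ap: "0 < Re (A 0 0)" using a0 by simp
        define x :: "nat \<Rightarrow> complex" where "x = (\<lambda>i. if i = 0 then - A 0 1 else of_real (Re (A 0 0)))"
        have A00: "A 0 0 = of_real (Re (A 0 0))" and A11: "A 1 1 = of_real (Re (A 1 1))"
          and A10: "A 1 0 = cnj (A 0 1)" using h(1) unfolding herm_def by (auto simp: complex_eq_iff)
        have bx: "bf A x x = of_real (Re (A 0 0) * (Re (A 0 0) * Re (A 1 1) - (cmod (A 0 1))^2))"
          unfolding bf_def x_def A10 by (subst (1 2) A00, subst A11)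
            (simp add: complex_eq_iff cmod_power2[unfolded power2_eq_square] power2_eq_square algebra_simps)
        have "0 \<le> Re (bf A x x)" using pA unfolding psdf_def by blast
        hence "0 \<le> Re (A 0 0) * Re (A 1 1) - (cmod (A 0 1))^2" unfolding bx using ap
          by (simp add: zero_le_mult_iff)
        hence "Re (A 0 0) * Re (A 1 1) - (cmod (A 0 1))^2 = 0" using nPD ap by linarith
        hence "bf A x x = 0" unfolding bx by simp
        moreover have "x 1 \<noteq> 0" unfolding x_def using ap by simp
        ultimately show ?thesis using that by blast
      qed
      have "bf N x e0 = 0" "bf N x e1 = 0" unfolding N_def bf_N using kill[OF x0] by simp_all
      from traceless_kill[OF hN trN this xnz] show ?thesis by (rule fin)
    qed
  qed
qed




lemma sum2: "(\<Sum>a<(2::nat). f a) = f 0 + f 1"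
  by (simp add: numeral_2_eq_2)

lemma sum4: "(\<Sum>a<(4::nat). f a) = f 0 + f 1 + f 2 + f 3"
  by (simp add: numeral_eq_Suc)

lemma sum2n: "(\<Sum>I<2*(n::nat). g I) = (\<Sum>i<n. g i) + (\<Sum>i<n. g (n + i))"
proof -
  have "(\<Sum>I<2*n. g I) = (\<Sum>I\<in>{0..<n}. g I) + (\<Sum>I\<in>{n..<n+n}. g I)"
    by (simp add: lessThan_atLeast0 sum.atLeastLessThan_concat mult_2)
  also have "(\<Sum>I\<in>{n..<n+n}. g I) = (\<Sum>i\<in>{0..<n}. g (n + i))"
    using sum.shift_bounds_nat_ivl[of g 0 n n] by (simp add: add.commute)
  finally show ?thesis by (simp add: lessThan_atLeast0)
qed

definition P :: "(complex mat \<Rightarrow> complex mat) \<Rightarrow> nat \<Rightarrow> nat \<Rightarrow> nat \<Rightarrow> nat \<Rightarrow> complex" where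
  "P \<phi> a b i j = \<phi> (unit2 a b) $$ (i, j)"

lemma unit2_carrier: "unit2 a b \<in> carrier_mat 2 2" unfolding unit2_def by simp

lemma less2: "(i::nat) < 2 \<longleftrightarrow> i = 0 \<or> i = 1" by auto

lemma decomp2:
  assumes "X \<in> carrier_mat 2 2"
  shows "X = (X$$(0,0) \<cdot>\<^sub>m unit2 0 0 + X$$(0,1) \<cdot>\<^sub>m unit2 0 1) + (X$$(1,0) \<cdot>\<^sub>m unit2 1 0 + X$$(1,1) \<cdot>\<^sub>m unit2 1 1)"
  using assms by (intro eq_matI) (auto simp: unit2_def less2)

lemma lin_entry:
  assumes lin: "qubit_linear \<phi>" and X: "X \<in> carrier_mat 2 2" and i: "i < 2" and j: "j < 2"
  shows "\<phi> X $$ (i,j) = (\<Sum>a<2. \<Sum>b<2. X$$(a,b) * P \<phi> a b i j)"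
proof -
  have add: "\<And>X Y. X \<in> carrier_mat 2 2 \<Longrightarrow> Y \<in> carrier_mat 2 2 \<Longrightarrow> \<phi> (X + Y) = \<phi> X + \<phi> Y"
    and sm: "\<And>X c. X \<in> carrier_mat 2 2 \<Longrightarrow> \<phi> (c \<cdot>\<^sub>m X) = c \<cdot>\<^sub>m \<phi> X"
    and car: "\<And>X. X \<in> carrier_mat 2 2 \<Longrightarrow> \<phi> X \<in> carrier_mat 2 2"
    using lin unfolding qubit_linear_def by blast+
  have u: "\<And>a b c. c \<cdot>\<^sub>m unit2 a b \<in> carrier_mat 2 2" using unit2_carrier by simp
  have cu: "\<And>a b. \<phi> (unit2 a b) \<in> carrier_mat 2 2" using car unit2_carrier by blast
  have dr: "\<And>a b. dim_row (\<phi> (unit2 a b)) = 2" "\<And>a b. dim_col (\<phi> (unit2 a b)) = 2" using cu by auto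
  have "\<phi> X = (X$$(0,0) \<cdot>\<^sub>m \<phi> (unit2 0 0) + X$$(0,1) \<cdot>\<^sub>m \<phi> (unit2 0 1)) + (X$$(1,0) \<cdot>\<^sub>m \<phi> (unit2 1 0) + X$$(1,1) \<cdot>\<^sub>m \<phi> (unit2 1 1))"
    apply (subst decomp2[OF X])
    apply (subst add, (intro add_carrier_mat u)+)
    apply (subst add, (rule u)+)+
    apply (simp add: sm unit2_carrier)
    done
  also have "\<dots> $$ (i,j) = (\<Sum>a<2. \<Sum>b<2. X$$(a,b) * P \<phi> a b i j)"
    using i j dr by (simp add: sum2 P_def)
  finally show ?thesis .
qed

lemma tensor_entry:
  assumes lin: "qubit_linear \<phi>" and I: "I < 2*n" and J: "J < 2*n"
  shows "tensor_id \<phi> n \<rho> $$ (I,J) = (\<Sum>a<2. \<Sum>b<2. \<rho>$$(a*n + I mod n, b*n + J mod n) * P \<phi> a b (I div n) (J div n))"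
proof -
  have n: "0 < n" using I by simp
  have "I div n < 2" "J div n < 2" using I J by (auto simp: div_less_iff_less_mult mult.commute)
  thus ?thesis unfolding tensor_id_def using I J
    by (simp add: lin_entry[OF lin])
qed


definition qf :: "nat \<Rightarrow> complex mat \<Rightarrow> (nat \<Rightarrow> complex) \<Rightarrow> complex" where
  "qf N M v = (\<Sum>i<N. \<Sum>j<N. cnj (v i) * M $$ (i, j) * v j)"

lemma psd_form: assumes "psd N M" shows "Im (qf N M v) = 0" "0 \<le> Re (qf N M v)"
proof -
  obtain r where "r \<ge> 0" "qf N M v = complex_of_real r" using assms unfolding psd_def qf_def by blast
  thus "Im (qf N M v) = 0" "0 \<le> Re (qf N M v)" by simp_all
qed

lemma psd_intro: assumes "M \<in> carrier_mat N N" "\<And>v. Im (qf N M v) = 0 \<and> 0 \<le> Re (qf N M v)"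
  shows "psd N M"
  unfolding psd_def
proof (intro conjI allI assms(1))
  fix v
  have "Im (qf N M v) = 0 \<and> 0 \<le> Re (qf N M v)" by (rule assms(2))
  hence "Re (qf N M v) \<ge> 0 \<and> qf N M v = complex_of_real (Re (qf N M v))" by (simp add: complex_eq_iff)
  thus "\<exists>r\<ge>0. (\<Sum>i<N. \<Sum>j<N. cnj (v i) * M $$ (i, j) * v j) = complex_of_real r" unfolding qf_def by blast
qed

lemma sum_supp1: assumes "finite S" "i \<in> S" "\<forall>k\<in>S. k \<noteq> i \<longrightarrow> g k = 0"
  shows "sum g S = g i"
proof -
  have "sum g S = sum g {i}" using assms by (intro sum.mono_neutral_right) auto
  thus ?thesis by simp
qed

lemma sum_supp2: assumes "finite S" "i \<in> S" "j \<in> S" "i \<noteq> j" "\<forall>k\<in>S. k \<noteq> i \<longrightarrow> k \<noteq> j \<longrightarrow> g k = 0"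
  shows "sum g S = g i + g j"
proof -
  have "sum g S = sum g {i, j}" using assms by (intro sum.mono_neutral_right) auto
  thus ?thesis using assms(4) by simp
qed

lemma qform_one: assumes "i < N"
  shows "qf N M (\<lambda>k. if k = i then a else 0) = cnj a * M $$ (i,i) * a"
  unfolding qf_def using assms
  by (subst sum_supp1[of _ i]) (auto intro!: sum.neutral simp: sum_supp1[of _ i])

lemma qform_two: assumes "i < N" "j < N" "i \<noteq> j"
  shows "qf N M (\<lambda>k. if k = i then a else if k = j then b else 0)
    = cnj a * M $$ (i,i) * a + cnj a * M $$ (i,j) * b + cnj b * M $$ (j,i) * a + cnj b * M $$ (j,j) * b"
proof -
  let ?v = "\<lambda>k. if k = i then a else if k = j then b else 0"
  have inner: "(\<Sum>l<N. cnj (?v k) * M $$ (k, l) * ?v l) = cnj (?v k) * M $$ (k, i) * a + cnj (?v k) * M $$ (k, j) * b" for k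
    using assms by (subst sum_supp2[of _ i j]) auto
  show ?thesis unfolding qf_def inner using assms
    by (subst sum_supp2[of _ i j]) (auto simp: algebra_simps)
qed

lemma psd_diag: assumes "psd N M" "i < N" shows "Im (M $$ (i,i)) = 0" "0 \<le> Re (M $$ (i,i))"
  using psd_form[OF assms(1), of "\<lambda>k. if k = i then 1 else 0"] unfolding qform_one[OF assms(2)] by simp_all

lemma psd_herm: assumes "psd N M" "i < N" "j < N" shows "M $$ (j,i) = cnj (M $$ (i,j))"
proof (cases "i = j")
  case True thus ?thesis using psd_diag[OF assms(1,2)] by (simp add: complex_eq_iff)
next
  case False
  have d: "Im (M $$ (i,i)) = 0" "Im (M $$ (j,j)) = 0" using psd_diag assms by auto
  have "Im (qf N M (\<lambda>k. if k = i then 1 else if k = j then 1 else 0)) = 0" by (rule psd_form[OF assms(1)])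
  hence e1: "Im (M $$ (i,j)) + Im (M $$ (j,i)) = 0" unfolding qform_two[OF assms(2,3) False] using d by simp
  have "Im (qf N M (\<lambda>k. if k = i then 1 else if k = j then \<i> else 0)) = 0" by (rule psd_form[OF assms(1)])
  hence e2: "Re (M $$ (i,j)) - Re (M $$ (j,i)) = 0" unfolding qform_two[OF assms(2,3) False] using d by simp
  show ?thesis using e1 e2 by (simp add: complex_eq_iff)
qed

lemma psd_zero_diag: assumes "psd N M" "i < N" "j < N" "M $$ (i,i) = 0"
  shows "M $$ (i,j) = 0"
proof (cases "i = j")
  case True thus ?thesis using assms by simp
next
  case False
  define m where "m = M $$ (i,j)"
  have h: "M $$ (j,i) = cnj m" unfolding m_def by (rule psd_herm[OF assms(1-3)])
  have dj: "Im (M $$ (j,j)) = 0" using psd_diag assms by auto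
  have eq: "Re (qf N M (\<lambda>k. if k = i then of_real t else if k = j then - cnj m else 0))
      = - 2 * t * (cmod m)^2 + (cmod m)^2 * Re (M $$ (j,j))" for t
    unfolding qform_two[OF assms(2,3) False] h assms(4) m_def[symmetric] using dj
    by (simp add: cmod_power2[unfolded power2_eq_square] power2_eq_square algebra_simps)
  have "0 \<le> - 2 * t * (cmod m)^2 + (cmod m)^2 * Re (M $$ (j,j))" for t
    using psd_form(2)[OF assms(1)] eq by metis
  from this[of "Re (M $$ (j,j)) + 1"]
  have "(cmod m)^2 * (Re (M $$ (j,j)) + 2) \<le> 0" by (simp add: algebra_simps)
  moreover have "0 < Re (M $$ (j,j)) + 2" using psd_diag(2)[OF assms(1,3)] by simp
  ultimately have "(cmod m)^2 \<le> 0" by (simp add: mult_le_0_iff)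
  thus ?thesis unfolding m_def by simp
qed


definition blk :: "(nat \<Rightarrow> nat \<Rightarrow> nat \<Rightarrow> nat \<Rightarrow> complex) \<Rightarrow> (nat \<Rightarrow> nat \<Rightarrow> complex) \<Rightarrow> nat \<Rightarrow> nat \<Rightarrow> nat \<Rightarrow> nat \<Rightarrow> complex" where
  "blk Pf s k l c d = (\<Sum>a<2. \<Sum>b<2. s k a * cnj (s l b) * Pf a b c d)"

definition rhos :: "(nat \<Rightarrow> nat \<Rightarrow> complex) \<Rightarrow> complex mat" where
  "rhos s = mat 4 4 (\<lambda>(I,J). s (I mod 2) (I div 2) * cnj (s (J mod 2) (J div 2)))"

lemma rhos_psd: "psd 4 (rhos s)"
proof (rule psd_intro)
  show "rhos s \<in> carrier_mat 4 4" unfolding rhos_def by simp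
  fix v :: "nat \<Rightarrow> complex"
  define z where "z = (\<Sum>I<4. cnj (v I) * s (I mod 2) (I div 2))"
  have "qf 4 (rhos s) v = (\<Sum>I<4. \<Sum>J<4. (cnj (v I) * s (I mod 2) (I div 2)) * cnj (cnj (v J) * s (J mod 2) (J div 2)))"
    unfolding qf_def rhos_def by (intro sum.cong refl) (simp add: algebra_simps)
  also have "\<dots> = z * cnj z" unfolding z_def cnj_sum sum_product by simp
  also have "\<dots> = of_real ((cmod z)^2)" by (rule complex_norm_square[symmetric])
  finally show "Im (qf 4 (rhos s) v) = 0 \<and> 0 \<le> Re (qf 4 (rhos s) v)" by simp
qed

lemma tensor_rhos:
  assumes lin: "qubit_linear \<phi>" and I: "I < 4" and J: "J < 4"
  shows "tensor_id \<phi> 2 (rhos s) $$ (I,J) = blk (P \<phi>) s (I mod 2) (J mod 2) (I div 2) (J div 2)"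
proof -
  have "tensor_id \<phi> 2 (rhos s) $$ (I,J) = (\<Sum>a<2. \<Sum>b<2. rhos s $$ (a*2 + I mod 2, b*2 + J mod 2) * P \<phi> a b (I div 2) (J div 2))"
    using tensor_entry[OF lin, of I 2 J] I J by simp
  also have "\<dots> = blk (P \<phi>) s (I mod 2) (J mod 2) (I div 2) (J div 2)"
    unfolding blk_def sum2 rhos_def by simp
  finally show ?thesis .
qed

lemma cp_psd:
  assumes lin: "qubit_linear \<phi>" and cp: "completely_positive \<phi>"
  shows "psd 4 (tensor_id \<phi> 2 (rhos s))"
  using cp rhos_psd unfolding completely_positive_def by (metis mult_2 numeral_Bit0 one_plus_numeral numeral_plus_one)

lemma cp_form:
  assumes lin: "qubit_linear \<phi>"
  shows "qf 4 (tensor_id \<phi> 2 (rhos s)) (\<lambda>I. if I mod 2 = 0 then x1 (I div 2) else x2 (I div 2))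
     = bf (blk (P \<phi>) s 0 0) x1 x1 + bf (blk (P \<phi>) s 0 1) x1 x2 + bf (blk (P \<phi>) s 1 0) x2 x1 + bf (blk (P \<phi>) s 1 1) x2 x2"
  unfolding qf_def sum4 using tensor_rhos[OF lin]
  by (simp add: bf_def)


definition sid :: "nat \<Rightarrow> nat \<Rightarrow> complex" where "sid k a = (if k = a then 1 else 0)"

lemma blk_sid: "k < 2 \<Longrightarrow> l < 2 \<Longrightarrow> blk Pf sid k l c d = Pf k l c d"
  unfolding blk_def sum2 sid_def by (auto simp: less2)

lemma herm_P:
  assumes lin: "qubit_linear \<phi>" and cp: "completely_positive \<phi>"
    and ab: "a < 2" "b < 2" "c < 2" "d < 2"
  shows "P \<phi> b a d c = cnj (P \<phi> a b c d)"
proof -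
  let ?T = "tensor_id \<phi> 2 (rhos sid)"
  have I: "2*c + a < 4" "2*d + b < 4" using ab by auto
  have "?T $$ (2*d + b, 2*c + a) = cnj (?T $$ (2*c + a, 2*d + b))"
    by (rule psd_herm[OF cp_psd[OF lin cp] I])
  thus ?thesis unfolding tensor_rhos[OF lin I(1) I(2)] tensor_rhos[OF lin I(2) I(1)] using ab
    by (simp add: blk_sid)
qed

lemma tp_P:
  assumes lin: "qubit_linear \<phi>" and tp: "trace_preserving \<phi>" and ab: "a < 2" "b < 2"
  shows "P \<phi> a b 0 0 + P \<phi> a b 1 1 = (if a = b then 1 else 0)"
proof -
  have car: "\<phi> (unit2 a b) \<in> carrier_mat 2 2" using lin unit2_carrier unfolding qubit_linear_def by blast
  have "trace (\<phi> (unit2 a b)) = trace (unit2 a b)" using tp unit2_carrier unfolding trace_preserving_def by blast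
  moreover have "trace (\<phi> (unit2 a b)) = P \<phi> a b 0 0 + P \<phi> a b 1 1" unfolding trace_def P_def using car by (simp add: sum2)
  moreover have "trace (unit2 a b) = (if a = b then 1 else 0)" unfolding trace_def unit2_def using ab by (auto simp: sum2 less2)
  ultimately show ?thesis by simp
qed

lemma kernel_exists:
  assumes "det_superop \<phi> = 0"
  shows "\<exists>X. (\<exists>a<2. \<exists>b<2. X a b \<noteq> 0) \<and> (\<forall>c<2. \<forall>d<2. (\<Sum>a<2. \<Sum>b<2. X a b * P \<phi> a b c d) = 0)"
proof -
  have car: "superop_matrix \<phi> \<in> carrier_mat 4 4" unfolding superop_matrix_def by simp
  obtain v where v: "v \<in> carrier_vec 4" "v \<noteq> 0\<^sub>v 4" "superop_matrix \<phi> *\<^sub>v v = 0\<^sub>v 4"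
    using assms det_0_iff_vec_prod_zero[OF car] unfolding det_superop_def by blast
  define X where "X = (\<lambda>a b. v $ (2*a + b))"
  have "\<exists>i<4. v $ i \<noteq> 0" using v(1,2) by (metis carrier_vecD eq_vecI index_zero_vec(1,2))
  then obtain i where i: "i < 4" "v $ i \<noteq> 0" by blast
  have nz: "\<exists>a<2. \<exists>b<2. X a b \<noteq> 0"
  proof -
    have "i = 2 * (i div 2) + i mod 2" by simp
    hence "X (i div 2) (i mod 2) \<noteq> 0" unfolding X_def using i by metis
    moreover have "i div 2 < 2" "i mod 2 < 2" using i by auto
    ultimately show ?thesis by blast
  qed
  have row0: "(\<Sum>j<4. superop_matrix \<phi> $$ (r, j) * v $ j) = 0" if r: "r < 4" for r
  proof -
    have "(superop_matrix \<phi> *\<^sub>v v) $ r = 0" using v(3) r by simp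
    thus ?thesis using car v(1) r by (simp add: scalar_prod_def atLeast0LessThan)
  qed
  have ker: "(\<Sum>a<2. \<Sum>b<2. X a b * P \<phi> a b c d) = 0" if cd: "c < 2" "d < 2" for c d
  proof -
    from cd have "c = 0 \<or> c = 1" "d = 0 \<or> d = 1" by auto
    thus ?thesis using row0[of "2*c+d"]
      by (auto simp: sum4 sum2 X_def superop_matrix_def P_def algebra_simps; simp add: numeral_2_eq_2 numeral_3_eq_3)
  qed
  show ?thesis using nz ker by blast
qed


definition hkern where
  "hkern \<phi> H \<longleftrightarrow> H 1 0 = cnj (H 0 1) \<and> Im (H 0 0) = 0 \<and> H 1 1 = - H 0 0 \<and> (H 0 0 \<noteq> 0 \<or> H 0 1 \<noteq> 0)
     \<and> (\<forall>c<2. \<forall>d<2. (\<Sum>a<2. \<Sum>b<2. H a b * P \<phi> a b c d) = 0)"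

lemma herm_kernel:
  assumes lin: "qubit_linear \<phi>" and cp: "completely_positive \<phi>" and tp: "trace_preserving \<phi>"
    and det: "det_superop \<phi> = 0"
  shows "\<exists>H. hkern \<phi> H"
proof -
  obtain X where nz: "\<exists>a<2. \<exists>b<2. X a b \<noteq> 0" and ker: "\<forall>c<2. \<forall>d<2. (\<Sum>a<2. \<Sum>b<2. X a b * P \<phi> a b c d) = 0"
    using kernel_exists[OF det] by blast
  have k: "X 0 0 * P \<phi> 0 0 c d + X 0 1 * P \<phi> 0 1 c d + (X 1 0 * P \<phi> 1 0 c d + X 1 1 * P \<phi> 1 1 c d) = 0"
    if "c < 2" "d < 2" for c d using ker that unfolding sum2 by auto
  have tp00: "P \<phi> 0 0 0 0 + P \<phi> 0 0 1 1 = 1" and tp01: "P \<phi> 0 1 0 0 + P \<phi> 0 1 1 1 = 0"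
    and tp10: "P \<phi> 1 0 0 0 + P \<phi> 1 0 1 1 = 0" and tp11: "P \<phi> 1 1 0 0 + P \<phi> 1 1 1 1 = 1"
    using tp_P[OF lin tp, of 0 0] tp_P[OF lin tp, of 0 1] tp_P[OF lin tp, of 1 0] tp_P[OF lin tp, of 1 1] by simp_all
  have tr: "X 1 1 = - X 0 0"
  proof -
    have "0 = (X 0 0 * P \<phi> 0 0 0 0 + X 0 1 * P \<phi> 0 1 0 0 + (X 1 0 * P \<phi> 1 0 0 0 + X 1 1 * P \<phi> 1 1 0 0))
         + (X 0 0 * P \<phi> 0 0 1 1 + X 0 1 * P \<phi> 0 1 1 1 + (X 1 0 * P \<phi> 1 0 1 1 + X 1 1 * P \<phi> 1 1 1 1))"
      using k[of 0 0] k[of 1 1] by simp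
    also have "\<dots> = X 0 0 * (P \<phi> 0 0 0 0 + P \<phi> 0 0 1 1) + X 0 1 * (P \<phi> 0 1 0 0 + P \<phi> 0 1 1 1)
        + X 1 0 * (P \<phi> 1 0 0 0 + P \<phi> 1 0 1 1) + X 1 1 * (P \<phi> 1 1 0 0 + P \<phi> 1 1 1 1)" by (simp add: algebra_simps)
    also have "\<dots> = X 0 0 + X 1 1" unfolding tp00 tp01 tp10 tp11 by simp
    finally show ?thesis by (simp add: eq_neg_iff_add_eq_0 add.commute)
  qed
  have hP: "P \<phi> b a d c = cnj (P \<phi> a b c d)" if "a < 2" "b < 2" "c < 2" "d < 2" for a b c d
    using herm_P[OF lin cp that] .
  have kstar: "cnj (X 0 0) * P \<phi> 0 0 c d + cnj (X 1 0) * P \<phi> 0 1 c d + (cnj (X 0 1) * P \<phi> 1 0 c d + cnj (X 1 1) * P \<phi> 1 1 c d) = 0"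
    if cd: "c < 2" "d < 2" for c d
  proof -
    have "cnj (X 0 0) * P \<phi> 0 0 c d + cnj (X 1 0) * P \<phi> 0 1 c d + (cnj (X 0 1) * P \<phi> 1 0 c d + cnj (X 1 1) * P \<phi> 1 1 c d)
       = cnj (X 0 0 * P \<phi> 0 0 d c + X 0 1 * P \<phi> 0 1 d c + (X 1 0 * P \<phi> 1 0 d c + X 1 1 * P \<phi> 1 1 d c))"
      using hP[of 0 0 d c] hP[of 0 1 d c] hP[of 1 0 d c] hP[of 1 1 d c] cd by simp
    also have "\<dots> = 0" using k[of d c] cd by simp
    finally show ?thesis .
  qed
  define H1 where "H1 = (\<lambda>a b. X a b + cnj (X b a))"
  define H2 where "H2 = (\<lambda>a b. \<i> * (X a b - cnj (X b a)))"
  have kH1: "\<forall>c<2. \<forall>d<2. (\<Sum>a<2. \<Sum>b<2. H1 a b * P \<phi> a b c d) = 0"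
  proof (intro allI impI)
    fix c d :: nat assume cd: "c < 2" "d < 2"
    have "(\<Sum>a<2. \<Sum>b<2. H1 a b * P \<phi> a b c d) = (X 0 0 * P \<phi> 0 0 c d + X 0 1 * P \<phi> 0 1 c d + (X 1 0 * P \<phi> 1 0 c d + X 1 1 * P \<phi> 1 1 c d))
       + (cnj (X 0 0) * P \<phi> 0 0 c d + cnj (X 1 0) * P \<phi> 0 1 c d + (cnj (X 0 1) * P \<phi> 1 0 c d + cnj (X 1 1) * P \<phi> 1 1 c d))"
      unfolding H1_def sum2 by (simp add: algebra_simps)
    thus "(\<Sum>a<2. \<Sum>b<2. H1 a b * P \<phi> a b c d) = 0" using k[OF cd] kstar[OF cd] by simp
  qed
  have kH2: "\<forall>c<2. \<forall>d<2. (\<Sum>a<2. \<Sum>b<2. H2 a b * P \<phi> a b c d) = 0"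
  proof (intro allI impI)
    fix c d :: nat assume cd: "c < 2" "d < 2"
    have "(\<Sum>a<2. \<Sum>b<2. H2 a b * P \<phi> a b c d) = \<i> * (X 0 0 * P \<phi> 0 0 c d + X 0 1 * P \<phi> 0 1 c d + (X 1 0 * P \<phi> 1 0 c d + X 1 1 * P \<phi> 1 1 c d))
       - \<i> * (cnj (X 0 0) * P \<phi> 0 0 c d + cnj (X 1 0) * P \<phi> 0 1 c d + (cnj (X 0 1) * P \<phi> 1 0 c d + cnj (X 1 1) * P \<phi> 1 1 c d))"
      unfolding H2_def sum2 by (simp add: algebra_simps)
    thus "(\<Sum>a<2. \<Sum>b<2. H2 a b * P \<phi> a b c d) = 0" using k[OF cd] kstar[OF cd] by simp
  qed
  have h1: "H1 1 0 = cnj (H1 0 1)" "Im (H1 0 0) = 0" "H1 1 1 = - H1 0 0" unfolding H1_def using tr by simp_all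
  have h2: "H2 1 0 = cnj (H2 0 1)" "Im (H2 0 0) = 0" "H2 1 1 = - H2 0 0" unfolding H2_def using tr
    by (simp_all add: algebra_simps)
  have rec: "2 * X a b = H1 a b - \<i> * H2 a b" for a b unfolding H1_def H2_def by (simp add: algebra_simps)
  show ?thesis
  proof (cases "H1 0 0 \<noteq> 0 \<or> H1 0 1 \<noteq> 0")
    case True thus ?thesis using h1 kH1 unfolding hkern_def by blast
  next
    case F1: False
    show ?thesis
    proof (cases "H2 0 0 \<noteq> 0 \<or> H2 0 1 \<noteq> 0")
      case True thus ?thesis using h2 kH2 unfolding hkern_def by blast
    next
      case False
      have "H1 a b = 0 \<and> H2 a b = 0" if "a < 2" "b < 2" for a b
        using that F1 False h1 h2 by (auto simp: less2)
      hence "X a b = 0" if "a < 2" "b < 2" for a b using rec[of a b] that by simp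
      thus ?thesis using nz by blast
    qed
  qed
qed


lemma make_uv:
  assumes "hkern \<phi> H"
  shows "\<exists>u v :: nat \<Rightarrow> complex. \<exists>k::real. k \<noteq> 0 \<and>
     (\<forall>a<2. \<forall>b<2. u a * cnj (u b) - v a * cnj (v b) = 2 * of_real k * H a b) \<and> u 0 * v 1 - v 0 * u 1 \<noteq> 0"
proof -
  define a where "a = Re (H 0 0)"
  define b where "b = H 0 1"
  have H00: "H 0 0 = of_real a" and H11: "H 1 1 = - of_real a" and H01: "H 0 1 = b" and H10: "H 1 0 = cnj b"
    using assms unfolding hkern_def a_def b_def by (auto simp: complex_eq_iff)
  have nz: "a \<noteq> 0 \<or> b \<noteq> 0" using assms unfolding hkern_def a_def b_def by (auto simp: complex_eq_iff)
  define r where "r = sqrt (a^2 + (cmod b)^2)"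
  have "0 < a^2 + (cmod b)^2"
  proof (cases "a = 0")
    case True thus ?thesis using nz by simp
  next
    case False hence "0 < a^2" by simp
    thus ?thesis by (simp add: add_pos_nonneg)
  qed
  hence r0: "0 < r" unfolding r_def by simp
  have rr: "r * r = a*a + (cmod b)^2" unfolding r_def by (simp add: power2_eq_square[symmetric])
  have rrc: "of_real r * of_real r = of_real a * of_real a + b * cnj b"
  proof -
    have "of_real (r * r) = (of_real (a*a + (cmod b)^2) :: complex)" using rr by simp
    thus ?thesis unfolding of_real_add of_real_mult complex_norm_square .
  qed
  have bb: "b * cnj b = of_real ((cmod b)^2)" by (rule complex_norm_square[symmetric])
  have bb2: "b * cnj b = of_real r * of_real r - of_real a * of_real a" using rrc by simp
  have bb3: "cnj b * b = of_real r * of_real r - of_real a * of_real a" using bb2 by (simp add: mult.commute)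
  show ?thesis
  proof (cases "r = a")
    case False
    define k where "k = r - a"
    have k0: "k \<noteq> 0" unfolding k_def using False by simp
    define u :: "nat \<Rightarrow> complex" where "u = (\<lambda>i. if i = 0 then b else of_real k)"
    define v :: "nat \<Rightarrow> complex" where "v = (\<lambda>i. if i = 0 then - of_real k else cnj b)"
    have e: "u i * cnj (u j) - v i * cnj (v j) = 2 * of_real k * H i j" if "i < 2" "j < 2" for i j
    proof -
      have kc: "(of_real k :: complex) = of_real r - of_real a" unfolding k_def by simp
      from that consider "i = 0" "j = 0" | "i = 0" "j = 1" | "i = 1" "j = 0" | "i = 1" "j = 1" by (auto simp: less2)
      thus ?thesis
      proof cases
        case 1 show ?thesis by (simp add: 1 u_def v_def H00 H00[unfolded One_nat_def] kc bb2 bb3 algebra_simps)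
      next
        case 2 show ?thesis by (simp add: 2 u_def v_def H01 H01[unfolded One_nat_def] kc bb2 bb3 algebra_simps)
      next
        case 3 show ?thesis by (simp add: 3 u_def v_def H10 H10[unfolded One_nat_def] kc bb2 bb3 algebra_simps)
      next
        case 4 show ?thesis by (simp add: 4 u_def v_def H11 H11[unfolded One_nat_def] kc bb2 bb3 algebra_simps)
      qed
    qed
    have "u 0 * v 1 - v 0 * u 1 = of_real ((cmod b)^2 + k * k)" unfolding u_def v_def using bb by simp
    moreover have "0 < (cmod b)^2 + k * k"
    proof -
      have "0 < k * k" using k0 by (simp add: zero_less_mult_iff linorder_neq_iff disj_commute)
      thus ?thesis by (simp add: add_nonneg_pos)
    qed
    ultimately have "u 0 * v 1 - v 0 * u 1 \<noteq> 0" by (metis of_real_eq_0_iff less_irrefl)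
    thus ?thesis using k0 e by blast
  next
    case True
    define k where "k = r + a"
    have k0: "k \<noteq> 0" unfolding k_def using True r0 by simp
    define u :: "nat \<Rightarrow> complex" where "u = (\<lambda>i. if i = 0 then of_real k else cnj b)"
    define v :: "nat \<Rightarrow> complex" where "v = (\<lambda>i. if i = 0 then - b else of_real k)"
    have e: "u i * cnj (u j) - v i * cnj (v j) = 2 * of_real k * H i j" if "i < 2" "j < 2" for i j
    proof -
      have kc: "(of_real k :: complex) = of_real r + of_real a" unfolding k_def by simp
      from that consider "i = 0" "j = 0" | "i = 0" "j = 1" | "i = 1" "j = 0" | "i = 1" "j = 1" by (auto simp: less2)
      thus ?thesis
      proof cases
        case 1 show ?thesis by (simp add: 1 u_def v_def H00 H00[unfolded One_nat_def] kc bb2 bb3 algebra_simps)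
      next
        case 2 show ?thesis by (simp add: 2 u_def v_def H01 H01[unfolded One_nat_def] kc bb2 bb3 algebra_simps)
      next
        case 3 show ?thesis by (simp add: 3 u_def v_def H10 H10[unfolded One_nat_def] kc bb2 bb3 algebra_simps)
      next
        case 4 show ?thesis by (simp add: 4 u_def v_def H11 H11[unfolded One_nat_def] kc bb2 bb3 algebra_simps)
      qed
    qed
    have "u 0 * v 1 - v 0 * u 1 = of_real ((cmod b)^2 + k * k)" unfolding u_def v_def using bb by simp
    moreover have "0 < (cmod b)^2 + k * k"
    proof -
      have "0 < k * k" using k0 by (simp add: zero_less_mult_iff linorder_neq_iff disj_commute)
      thus ?thesis by (simp add: add_nonneg_pos)
    qed
    ultimately have "u 0 * v 1 - v 0 * u 1 \<noteq> 0" by (metis of_real_eq_0_iff less_irrefl)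
    thus ?thesis using k0 e by blast
  qed
qed


lemma sum3: "(\<Sum>a<(3::nat). f a) = f 0 + f 1 + f 2"
  by (simp add: numeral_3_eq_3 numeral_2_eq_2)

definition MPf where
  "MPf \<phi> \<longleftrightarrow> (\<exists>(m::nat) (f::nat \<Rightarrow> nat \<Rightarrow> complex) (Q::nat \<Rightarrow> nat \<Rightarrow> nat \<Rightarrow> complex). (\<forall>k<m. psdf (Q k)) \<and>
     (\<forall>a<2. \<forall>b<2. \<forall>c<2. \<forall>d<2. P \<phi> a b c d = (\<Sum>k<m. cnj (f k a) * f k b * Q k c d)))"

lemma rearr:
  fixes G G' :: "nat \<Rightarrow> complex" and s :: "nat \<Rightarrow> nat \<Rightarrow> complex" and p :: "nat \<Rightarrow> nat \<Rightarrow> complex"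
  shows "(\<Sum>k<2. \<Sum>l<2. G k * cnj (G' l) * (\<Sum>a'<2. \<Sum>b'<2. s k a' * cnj (s l b') * p a' b'))
   = (\<Sum>a'<2. \<Sum>b'<2. (\<Sum>k<2. G k * s k a') * cnj (\<Sum>l<2. G' l * s l b') * p a' b')"
  unfolding sum2 by (simp add: algebra_simps)

lemma final_id:
  fixes x0 x1 y0 y1 b1 b2 q1 q2 r :: complex
  shows "(x0*y0)*(q1+q2) + (x0*y1)*(b1*q1+b2*q2) + (x1*y0)*(b1*q1+b2*q2) + (x1*y1)*(b1*b1*q1 + b2*b2*q2 + r)
    = (x0 + b1*x1)*(y0 + b1*y1)*q1 + (x0+b2*x1)*(y0+b2*y1)*q2 + x1*y1*r"
  by (simp add: algebra_simps)

lemma blk_herm: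
  assumes lin: "qubit_linear \<phi>" and cp: "completely_positive \<phi>" and cd: "c < 2" "d < 2"
  shows "blk (P \<phi>) s l k d c = cnj (blk (P \<phi>) s k l c d)"
proof -
  have h: "P \<phi> b a d c = cnj (P \<phi> a b c d)" if "a < 2" "b < 2" for a b using herm_P[OF lin cp that cd] .
  show ?thesis unfolding blk_def sum2 using h[of 0 0] h[of 0 1] h[of 1 0] h[of 1 1]
    by (simp add: algebra_simps)
qed

lemma bf_cong4: "M 0 0 = M' 0 0 \<Longrightarrow> M 0 1 = M' 0 1 \<Longrightarrow> M 1 0 = M' 1 0 \<Longrightarrow> M 1 1 = M' 1 1 \<Longrightarrow> bf M x y = bf M' x y"
  unfolding bf_def by simp


lemma mp_exists:
  assumes lin: "qubit_linear \<phi>" and cp: "completely_positive \<phi>" and tp: "trace_preserving \<phi>"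
    and det: "det_superop \<phi> = 0"
  shows "MPf \<phi>"
proof -
  obtain H where hk: "hkern \<phi> H" using herm_kernel[OF lin cp tp det] by blast
  obtain u v :: "nat \<Rightarrow> complex" and k :: real where k0: "k \<noteq> 0"
    and uv: "\<forall>a<2. \<forall>b<2. u a * cnj (u b) - v a * cnj (v b) = 2 * of_real k * H a b"
    and duv: "u 0 * v 1 - v 0 * u 1 \<noteq> 0"
    using make_uv[OF hk] by blast
  have kerH: "(\<Sum>a<2. \<Sum>b<2. H a b * P \<phi> a b c d) = 0" if "c < 2" "d < 2" for c d
    using hk that unfolding hkern_def by blast
  define s :: "nat \<Rightarrow> nat \<Rightarrow> complex" where "s = (\<lambda>j a. if j = 0 then u a + v a else \<i> * (u a - v a))"
  have dif: "s 0 a * cnj (s 1 b) - s 1 a * cnj (s 0 b) = (- 4 * \<i> * of_real k) * H a b" if "a < 2" "b < 2" for a b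
  proof -
    have "s 0 a * cnj (s 1 b) - s 1 a * cnj (s 0 b) = - 2 * \<i> * (u a * cnj (u b) - v a * cnj (v b))"
      unfolding s_def by (simp add: algebra_simps)
    thus ?thesis using uv that by simp
  qed
  define Bl where "Bl = blk (P \<phi>) s"
  have anti: "Bl 0 1 c d = Bl 1 0 c d" if cd: "c < 2" "d < 2" for c d
  proof -
    have "Bl 0 1 c d - Bl 1 0 c d = (\<Sum>a<2. \<Sum>b<2. (s 0 a * cnj (s 1 b) - s 1 a * cnj (s 0 b)) * P \<phi> a b c d)"
      unfolding Bl_def blk_def sum2 by (simp add: algebra_simps)
    also have "\<dots> = (\<Sum>a<2. \<Sum>b<2. (- 4 * \<i> * of_real k) * (H a b * P \<phi> a b c d))"
      apply (intro sum.cong refl)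
      apply (subst dif)
        apply auto
      done
    also have "\<dots> = (- 4 * \<i> * of_real k) * (\<Sum>a<2. \<Sum>b<2. H a b * P \<phi> a b c d)"
      by (simp add: sum_distrib_left)
    also have "\<dots> = 0" using kerH[OF cd] by simp
    finally show ?thesis by simp
  qed
  have bh: "Bl l j d c = cnj (Bl j l c d)" if "c < 2" "d < 2" for j l c d
    unfolding Bl_def by (rule blk_herm[OF lin cp that])
  define A where "A = Bl 0 0"
  define B where "B = Bl 0 1"
  define D where "D = Bl 1 1"
  have realpart: "Im z = 0" if "z = cnj z" for z using that by (metis cnj.sel(2) complex.sel(2) equal_neg_zero)
  have hA: "herm A" unfolding herm_def A_def using bh[where j=0 and l=0 and c=0 and d=1] bh[where j=0 and l=0 and c=0 and d=0] bh[where j=0 and l=0 and c=1 and d=1] realpart by auto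
  have hD: "herm D" unfolding herm_def D_def using bh[where j=1 and l=1 and c=0 and d=1] bh[where j=1 and l=1 and c=0 and d=0] bh[where j=1 and l=1 and c=1 and d=1] realpart by auto
  have hB: "herm B" unfolding herm_def B_def
    using bh[where j=1 and l=0 and c=0 and d=1] bh[where j=0 and l=1 and c=0 and d=0] bh[where j=0 and l=1 and c=1 and d=1] anti[of 0 1] anti[of 0 0] anti[of 1 1] realpart by auto
  have pos: "\<forall>x1 x2. 0 \<le> Re (Fs A B D x1 x2 x1 x2)"
  proof (intro allI)
    fix x1 x2 :: "nat \<Rightarrow> complex"
    have "bf (Bl 1 0) x2 x1 = bf B x2 x1" unfolding B_def by (rule bf_cong4) (use anti[of 0 0] anti[of 0 1] anti[of 1 0] anti[of 1 1] in simp_all)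
    hence "Fs A B D x1 x2 x1 x2 = qf 4 (tensor_id \<phi> 2 (rhos s)) (\<lambda>I. if I mod 2 = 0 then x1 (I div 2) else x2 (I div 2))"
      unfolding cp_form[OF lin] Fs_def A_def B_def D_def Bl_def by simp
    thus "0 \<le> Re (Fs A B D x1 x2 x1 x2)" using psd_form(2)[OF cp_psd[OF lin cp]] by simp
  qed
  obtain b1 b2 :: real and Q1 Q2 R where pQ: "psdf Q1" "psdf Q2" "psdf R"
    and idd: "\<forall>i<2. \<forall>j<2. A i j = Q1 i j + Q2 i j \<and> B i j = of_real b1 * Q1 i j + of_real b2 * Q2 i j
        \<and> D i j = of_real b1 * of_real b1 * Q1 i j + of_real b2 * of_real b2 * Q2 i j + R i j"
    using core[OF hA hB hD pos] unfolding decomp_def by blast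
  define dS where "dS = s 0 0 * s 1 1 - s 1 0 * s 0 1"
  have dS: "dS \<noteq> 0"
  proof -
    have "dS = - 2 * \<i> * (u 0 * v 1 - v 0 * u 1)" unfolding dS_def s_def by (simp add: algebra_simps)
    thus ?thesis using duv by simp
  qed
  define Si :: "nat \<Rightarrow> nat \<Rightarrow> complex" where
    "Si = (\<lambda>j a. (if j = 0 then (if a = 0 then s 1 1 else - s 1 0) else (if a = 0 then - s 0 1 else s 0 0)) / dS)"
  define Sn :: "nat \<Rightarrow> nat \<Rightarrow> complex" where
    "Sn = (\<lambda>j a. if j = 0 then (if a = 0 then s 1 1 else - s 1 0) else (if a = 0 then - s 0 1 else s 0 0))"
  have Si_Sn: "Si j a = Sn j a / dS" for j a unfolding Si_def Sn_def by simp
  have inv: "(\<Sum>j<2. Si j a * s j a') = (if a' = a then 1 else 0)" if "a < 2" "a' < 2" for a a'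
  proof -
    have e: "(\<Sum>j<2. Si j a * s j a') = (Sn 0 a * s 0 a' + Sn 1 a * s 1 a') / dS"
      unfolding sum2 Si_Sn by (simp add: add_divide_distrib)
    have "Sn 0 a * s 0 a' + Sn 1 a * s 1 a' = (if a' = a then dS else 0)"
      using that unfolding Sn_def dS_def by (auto simp: less2 algebra_simps)
    thus ?thesis unfolding e using dS by simp
  qed
  have recon: "P \<phi> a b c d = (\<Sum>j<2. \<Sum>l<2. Si j a * cnj (Si l b) * Bl j l c d)"
    if ab: "a < 2" "b < 2" for a b c d
  proof -
    have "(\<Sum>j<2. \<Sum>l<2. Si j a * cnj (Si l b) * Bl j l c d)
       = (\<Sum>a'<2. \<Sum>b'<2. (\<Sum>j<2. Si j a * s j a') * cnj (\<Sum>l<2. Si l b * s l b') * P \<phi> a' b' c d)"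
      unfolding Bl_def blk_def by (rule rearr)
    also have "\<dots> = (\<Sum>a'<2. \<Sum>b'<2. (if a' = a then 1 else 0) * cnj (if b' = b then 1 else 0) * P \<phi> a' b' c d)"
      by (intro sum.cong refl) (simp add: inv ab)
    also have "\<dots> = P \<phi> a b c d" unfolding sum2 using ab by (auto simp: less2)
    finally show ?thesis by simp
  qed
  define f :: "nat \<Rightarrow> nat \<Rightarrow> complex" where
    "f = (\<lambda>j a. if j = 0 then cnj (Si 0 a) + of_real b1 * cnj (Si 1 a)
              else if j = 1 then cnj (Si 0 a) + of_real b2 * cnj (Si 1 a) else cnj (Si 1 a))"
  define Q where "Q = (\<lambda>j::nat. if j = 0 then Q1 else if j = 1 then Q2 else R)"
  show ?thesis unfolding MPf_def
  proof (intro exI[of _ 3] exI[of _ f] exI[of _ Q] conjI allI impI)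
    fix j :: nat assume "j < 3" thus "psdf (Q j)" unfolding Q_def using pQ by auto
  next
    fix a b c d :: nat assume abcd: "a < 2" "b < 2" "c < 2" "d < 2"
    have e: "A c d = Q1 c d + Q2 c d" "B c d = of_real b1 * Q1 c d + of_real b2 * Q2 c d"
      "D c d = of_real b1 * of_real b1 * Q1 c d + of_real b2 * of_real b2 * Q2 c d + R c d"
      using idd abcd by auto
    have "P \<phi> a b c d = Si 0 a * cnj (Si 0 b) * A c d + Si 0 a * cnj (Si 1 b) * B c d
        + Si 1 a * cnj (Si 0 b) * B c d + Si 1 a * cnj (Si 1 b) * D c d"
      unfolding recon[OF abcd(1,2)] sum2 A_def B_def D_def anti[OF abcd(3,4)] by (simp add: algebra_simps)
    also have "\<dots> = (\<Sum>j<3. cnj (f j a) * f j b * Q j c d)"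
      unfolding e sum3 f_def Q_def using final_id[of "Si 0 a" "cnj (Si 0 b)" "of_real b1" "Q1 c d" "Q2 c d" "Si 1 a" "cnj (Si 1 b)" "of_real b2" "R c d"]
      by (simp add: algebra_simps)
    finally show "P \<phi> a b c d = (\<Sum>j<3. cnj (f j a) * f j b * Q j c d)" .
  qed
qed


lemma sum2n': "(\<Sum>I<2*(n::nat). g I) = (\<Sum>a<2. \<Sum>i<n. g (a*n + i))"
  unfolding sum2n sum2 by simp

lemma qf_split: "qf (2*n) M v = (\<Sum>a<2. \<Sum>i<n. \<Sum>b<2. \<Sum>j<n. cnj (v (a*n+i)) * M $$ (a*n+i, b*n+j) * v (b*n+j))"
  unfolding qf_def sum2n' ..

lemma swap4: fixes F :: "nat \<Rightarrow> nat \<Rightarrow> nat \<Rightarrow> nat \<Rightarrow> complex" shows "(\<Sum>a<2. \<Sum>i<(n::nat). \<Sum>b<2. \<Sum>j<(m::nat). F a i b j) = (\<Sum>i<n. \<Sum>j<m. \<Sum>a<2. \<Sum>b<2. F a i b j)"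
  unfolding sum2 by (simp add: sum.distrib add_ac)

definition Bk :: "nat \<Rightarrow> complex mat \<Rightarrow> (nat \<Rightarrow> complex) \<Rightarrow> complex mat" where
  "Bk n \<rho> g = mat n n (\<lambda>(i,j). \<Sum>a<2. \<Sum>b<2. cnj (g a) * \<rho> $$ (a*n+i, b*n+j) * g b)"

lemma Bk_psd: assumes "psd (2*n) \<rho>" shows "psd n (Bk n \<rho> g)"
proof (rule psd_intro)
  show "Bk n \<rho> g \<in> carrier_mat n n" unfolding Bk_def by simp
  fix w :: "nat \<Rightarrow> complex"
  define v where "v = (\<lambda>I. g (I div n) * w (I mod n))"
  have "qf (2*n) \<rho> v = (\<Sum>a<2. \<Sum>i<n. \<Sum>b<2. \<Sum>j<n. cnj (g a * w i) * \<rho> $$ (a*n+i, b*n+j) * (g b * w j))"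
    unfolding qf_split v_def by (intro sum.cong refl) simp
  also have "\<dots> = (\<Sum>i<n. \<Sum>j<n. \<Sum>a<2. \<Sum>b<2. cnj (g a * w i) * \<rho> $$ (a*n+i, b*n+j) * (g b * w j))"
    by (rule swap4)
  also have "\<dots> = qf n (Bk n \<rho> g) w"
    unfolding qf_def Bk_def
    by (intro sum.cong refl) (simp add: sum_distrib_left sum_distrib_right algebra_simps)
  finally have "qf n (Bk n \<rho> g) w = qf (2*n) \<rho> v" by simp
  thus "Im (qf n (Bk n \<rho> g) w) = 0 \<and> 0 \<le> Re (qf n (Bk n \<rho> g) w)" using psd_form[OF assms] by simp
qed

lemma T_entry:
  assumes lin: "qubit_linear \<phi>" and I: "I < 2*n" and J: "J < 2*n"
    and mp: "\<forall>a<2. \<forall>b<2. \<forall>c<2. \<forall>d<2. P \<phi> a b c d = (\<Sum>k<m. cnj (f k a) * f k b * Q k c d)"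
  shows "tensor_id \<phi> n \<rho> $$ (I,J) = (\<Sum>k<m. Q k (I div n) (J div n) * Bk n \<rho> (f k) $$ (I mod n, J mod n))"
proof -
  have n: "0 < n" using I by simp
  have cd: "I div n < 2" "J div n < 2" using I J by (auto simp: div_less_iff_less_mult mult.commute)
  have "tensor_id \<phi> n \<rho> $$ (I,J) = (\<Sum>a<2. \<Sum>b<2. \<rho>$$(a*n + I mod n, b*n + J mod n) *
      (\<Sum>k<m. cnj (f k a) * f k b * Q k (I div n) (J div n)))"
    unfolding tensor_entry[OF lin I J] using mp cd by (intro sum.cong refl) auto
  also have "\<dots> = (\<Sum>k<m. Q k (I div n) (J div n) * Bk n \<rho> (f k) $$ (I mod n, J mod n))"
    unfolding Bk_def using n by (simp add: sum2 sum_distrib_left sum.distrib algebra_simps)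
  finally show ?thesis .
qed


lemma trace_sum:
  assumes lin: "qubit_linear \<phi>" and tp: "trace_preserving \<phi>" and rc: "\<rho> \<in> carrier_mat (2*n) (2*n)"
    and mp: "\<forall>a<2. \<forall>b<2. \<forall>c<2. \<forall>d<2. P \<phi> a b c d = (\<Sum>k<m. cnj (f k a) * f k b * Q k c d)"
  shows "(\<Sum>k<m. (Q k 0 0 + Q k 1 1) * trace (Bk n \<rho> (f k))) = trace \<rho>"
proof -
  have tpab: "P \<phi> a b 0 0 + P \<phi> a b 1 1 = (\<Sum>k<m. cnj (f k a) * f k b * (Q k 0 0 + Q k 1 1))"
    if "a < 2" "b < 2" for a b using mp that by (simp add: sum.distrib[symmetric] algebra_simps)
  have t00: "P \<phi> 0 0 0 0 + P \<phi> 0 0 1 1 = 1" and t01: "P \<phi> 0 1 0 0 + P \<phi> 0 1 1 1 = 0"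
    and t10: "P \<phi> 1 0 0 0 + P \<phi> 1 0 1 1 = 0" and t11: "P \<phi> 1 1 0 0 + P \<phi> 1 1 1 1 = 1"
    using tp_P[OF lin tp, of 0 0] tp_P[OF lin tp, of 0 1] tp_P[OF lin tp, of 1 0] tp_P[OF lin tp, of 1 1] by simp_all
  have inner: "(\<Sum>k<m. (Q k 0 0 + Q k 1 1) * (\<Sum>a<2. \<Sum>b<2. cnj (f k a) * \<rho> $$ (a*n+i, b*n+i) * f k b))
      = \<rho> $$ (i, i) + \<rho> $$ (n+i, n+i)" for i
  proof -
    have "(\<Sum>k<m. (Q k 0 0 + Q k 1 1) * (\<Sum>a<2. \<Sum>b<2. cnj (f k a) * \<rho> $$ (a*n+i, b*n+i) * f k b))
      = (\<Sum>a<2. \<Sum>b<2. \<rho> $$ (a*n+i, b*n+i) * (\<Sum>k<m. cnj (f k a) * f k b * (Q k 0 0 + Q k 1 1)))"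
      by (simp add: sum2 sum_distrib_left sum.distrib algebra_simps)
    also have "\<dots> = (\<Sum>a<2. \<Sum>b<2. \<rho> $$ (a*n+i, b*n+i) * (P \<phi> a b 0 0 + P \<phi> a b 1 1))"
      apply (intro sum.cong refl)
      apply (subst tpab)
        apply auto
      done
    also have "\<dots> = \<rho> $$ (i, i) + \<rho> $$ (n+i, n+i)"
      unfolding sum2 using t00 t01 t10 t11 by simp
    finally show ?thesis .
  qed
  have "(\<Sum>k<m. (Q k 0 0 + Q k 1 1) * trace (Bk n \<rho> (f k)))
      = (\<Sum>k<m. \<Sum>i<n. (Q k 0 0 + Q k 1 1) * (\<Sum>a<2. \<Sum>b<2. cnj (f k a) * \<rho> $$ (a*n+i, b*n+i) * f k b))"
    unfolding trace_def Bk_def by (simp add: sum_distrib_left)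
  also have "\<dots> = (\<Sum>i<n. \<Sum>k<m. (Q k 0 0 + Q k 1 1) * (\<Sum>a<2. \<Sum>b<2. cnj (f k a) * \<rho> $$ (a*n+i, b*n+i) * f k b))"
    by (rule sum.swap)
  also have "\<dots> = (\<Sum>i<n. \<rho> $$ (i, i) + \<rho> $$ (n+i, n+i))" unfolding inner ..
  also have "\<dots> = trace \<rho>" unfolding trace_def using rc by (simp add: sum2n sum.distrib)
  finally show ?thesis .
qed

lemma psdf_tr0:
  assumes "psdf M" "Re (M 0 0) + Re (M 1 1) = 0"
  shows "M 0 0 = 0 \<and> M 0 1 = 0 \<and> M 1 0 = 0 \<and> M 1 1 = 0"
proof -
  have h: "herm M" and pos: "\<And>x. 0 \<le> Re (bf M x x)" using assms(1) unfolding psdf_def by auto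
  have "0 \<le> Re (M 0 0)" "0 \<le> Re (M 1 1)" using pos[of e0] pos[of e1] unfolding bf_e(1) bf_e(4) by simp_all
  hence "Re (M 0 0) = 0" "Re (M 1 1) = 0" using assms(2) by linarith+
  hence d: "M 0 0 = 0" "M 1 1 = 0" using h unfolding herm_def by (auto simp: complex_eq_iff)
  have m10: "M 1 0 = cnj (M 0 1)" using h unfolding herm_def by simp
  define x :: "nat \<Rightarrow> complex" where "x = (\<lambda>i. if i = 0 then 1 else - cnj (M 0 1))"
  have "bf M x x = - 2 * (M 0 1 * cnj (M 0 1))" unfolding bf_def x_def d m10 by simp
  also have "\<dots> = of_real (- 2 * (cmod (M 0 1))^2)" unfolding complex_norm_square[symmetric] by simp
  finally have "0 \<le> - 2 * (cmod (M 0 1))^2" using pos[of x] by simp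
  hence "M 0 1 = 0" by simp
  thus ?thesis using d m10 by simp
qed

lemma psd_tr0:
  assumes "psd n M" "(\<Sum>i<n. Re (M $$ (i,i))) = 0" "i < n" "j < n"
  shows "M $$ (i,j) = 0"
proof -
  have "(\<Sum>i<n. Re (M $$ (i,i))) = 0 \<longleftrightarrow> (\<forall>k\<in>{..<n}. Re (M $$ (k,k)) = 0)"
    by (rule sum_nonneg_eq_0_iff) (auto intro: psd_diag(2)[OF assms(1)])
  hence "Re (M $$ (i,i)) = 0" using assms(2,3) by simp
  hence "M $$ (i,i) = 0" using psd_diag(1)[OF assms(1,3)] by (simp add: complex_eq_iff)
  thus ?thesis by (rule psd_zero_diag[OF assms(1,3,4)])
qed


lemma kron_entry:
  assumes "A \<in> carrier_mat 2 2" "B \<in> carrier_mat n n" "I < 2*n" "J < 2*n"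
  shows "kron A B $$ (I,J) = A $$ (I div n, J div n) * B $$ (I mod n, J mod n)"
  using assms unfolding kron_def by simp

lemma unit00_state: "is_state 2 (unit2 0 0)"
  unfolding is_state_def
proof
  show "psd 2 (unit2 0 0)"
  proof (rule psd_intro[OF unit2_carrier])
    fix v :: "nat \<Rightarrow> complex"
    have "qf 2 (unit2 0 0) v = of_real ((cmod (v 0))^2)"
      unfolding qf_def sum2 unit2_def complex_norm_square by (simp add: mult.commute)
    thus "Im (qf 2 (unit2 0 0) v) = 0 \<and> 0 \<le> Re (qf 2 (unit2 0 0) v)" by simp
  qed
  show "trace (unit2 0 0) = 1" unfolding trace_def unit2_def by (simp add: sum2)
qed

lemma E0_state:
  assumes n: "0 < n"
  shows "is_state n (mat n n (\<lambda>(i,j). if i = 0 \<and> j = 0 then 1 else 0))" (is "is_state n ?E")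
  unfolding is_state_def
proof
  show "psd n ?E"
  proof (rule psd_intro)
    show "?E \<in> carrier_mat n n" by simp
    fix v :: "nat \<Rightarrow> complex"
    have "qf n ?E v = (\<Sum>j<n. cnj (v 0) * ?E $$ (0, j) * v j)"
      unfolding qf_def using n by (intro sum_supp1) auto
    also have "\<dots> = cnj (v 0) * ?E $$ (0, 0) * v 0"
      using n by (intro sum_supp1) auto
    also have "\<dots> = of_real ((cmod (v 0))^2)" unfolding complex_norm_square using n by (simp add: mult.commute)
    finally show "Im (qf n ?E v) = 0 \<and> 0 \<le> Re (qf n ?E v)" by simp
  qed
  have "trace ?E = ?E $$ (0,0)" unfolding trace_def using n by (intro sum_supp1) auto
  thus "trace ?E = 1" using n by simp
qed

lemma eb_from_mp:
  assumes lin: "qubit_linear \<phi>" and tp: "trace_preserving \<phi>" and mp: "MPf \<phi>"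
  shows "entanglement_breaking \<phi>"
proof -
  obtain m :: nat and f :: "nat \<Rightarrow> nat \<Rightarrow> complex" and Q :: "nat \<Rightarrow> nat \<Rightarrow> nat \<Rightarrow> complex"
    where pQ: "\<forall>k<m. psdf (Q k)"
      and mpe: "\<forall>a<2. \<forall>b<2. \<forall>c<2. \<forall>d<2. P \<phi> a b c d = (\<Sum>k<m. cnj (f k a) * f k b * Q k c d)"
    using mp unfolding MPf_def by blast
  show ?thesis unfolding entanglement_breaking_def
  proof (intro allI impI)
    fix n \<rho> assume st: "is_state (2*n) \<rho>"
    have ps: "psd (2*n) \<rho>" and tr1: "trace \<rho> = 1" using st unfolding is_state_def by auto
    have rc: "\<rho> \<in> carrier_mat (2*n) (2*n)" using ps unfolding psd_def by auto
    have n: "0 < n"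
    proof (rule ccontr)
      assume "\<not> 0 < n" hence "n = 0" by simp
      hence "trace \<rho> = 0" using rc unfolding trace_def by simp
      thus False using tr1 by simp
    qed
    define B where "B = (\<lambda>k. Bk n \<rho> (f k))"
    have pB: "psd n (B k)" for k unfolding B_def by (rule Bk_psd[OF ps])
    have cB: "B k \<in> carrier_mat n n" for k using pB[of k] unfolding psd_def by auto
    define tq where "tq = (\<lambda>k. Re (Q k 0 0) + Re (Q k 1 1))"
    define tb where "tb = (\<lambda>k. \<Sum>i<n. Re (B k $$ (i,i)))"
    have tq0: "0 \<le> tq k" if "k < m" for k
    proof -
      have "0 \<le> Re (bf (Q k) e0 e0)" "0 \<le> Re (bf (Q k) e1 e1)" using pQ that unfolding psdf_def by auto
      thus ?thesis unfolding tq_def bf_e(1) bf_e(4) by simp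
    qed
    have tb0: "0 \<le> tb k" for k unfolding tb_def by (intro sum_nonneg) (simp add: psd_diag(2)[OF pB])
    have Qre: "Q k 0 0 + Q k 1 1 = of_real (tq k)" if "k < m" for k
      using pQ that unfolding psdf_def herm_def tq_def by (auto simp: complex_eq_iff)
    have Bre: "trace (B k) = of_real (tb k)" for k
      unfolding trace_def tb_def using cB[of k] psd_diag(1)[OF pB[of k]]
      by (simp add: complex_eq_iff Re_sum Im_sum)
    define p where "p = (\<lambda>k. tq k * tb k)"
    have sum1: "(\<Sum>k<m. p k) = 1"
    proof -
      have "(\<Sum>k<m. (Q k 0 0 + Q k 1 1) * trace (B k)) = 1"
        using trace_sum[OF lin tp rc mpe] tr1 unfolding B_def by simp
      moreover have "(\<Sum>k<m. (Q k 0 0 + Q k 1 1) * trace (B k)) = of_real (\<Sum>k<m. p k)"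
        unfolding of_real_sum p_def by (intro sum.cong refl) (simp add: Qre[unfolded One_nat_def] Bre)
      ultimately show ?thesis by (metis of_real_eq_1_iff)
    qed
    define A where "A = (\<lambda>k. if tq k = 0 then unit2 0 0 else mat 2 2 (\<lambda>(c,d). Q k c d * of_real (1 / tq k)))"
    define E0 :: "complex mat" where "E0 = mat n n (\<lambda>(i,j). if i = 0 \<and> j = 0 then 1 else 0)"
    define Bn where "Bn = (\<lambda>k. if tb k = 0 then E0 else mat n n (\<lambda>(i,j). B k $$ (i,j) * of_real (1 / tb k)))"
    have cA: "A k \<in> carrier_mat 2 2" for k unfolding A_def using unit2_carrier by simp
    have cBn: "Bn k \<in> carrier_mat n n" for k unfolding Bn_def E0_def by simp
    have stA: "is_state 2 (A k)" if k: "k < m" for k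
    proof (cases "tq k = 0")
      case True thus ?thesis unfolding A_def using unit00_state by simp
    next
      case False
      hence tqp: "0 < tq k" using tq0[OF k] by simp
      let ?M = "mat 2 2 (\<lambda>(c,d). Q k c d * of_real (1 / tq k))"
      have "psd 2 ?M"
      proof (rule psd_intro)
        show "?M \<in> carrier_mat 2 2" by simp
        fix v
        have "qf 2 ?M v = bf (\<lambda>c d. Q k c d * of_real (1 / tq k)) v v"
          unfolding qf_def bf_def sum2 by simp
        moreover have "psdf (\<lambda>c d. Q k c d * of_real (1 / tq k))"
          using psdf_scale[of "Q k" "1 / tq k"] pQ k tqp by simp
        ultimately show "Im (qf 2 ?M v) = 0 \<and> 0 \<le> Re (qf 2 ?M v)" unfolding psdf_def by simp
      qed
      moreover have "trace ?M = 1"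
      proof -
        have "trace ?M = (Q k 0 0 + Q k 1 1) * of_real (1 / tq k)" unfolding trace_def by (simp add: sum2 algebra_simps)
        also have "\<dots> = 1" unfolding Qre[OF k] using False by (simp flip: of_real_mult)
        finally show ?thesis .
      qed
      ultimately show ?thesis unfolding A_def is_state_def using False by simp
    qed
    have stB: "is_state n (Bn k)" for k
    proof (cases "tb k = 0")
      case True thus ?thesis unfolding Bn_def E0_def using E0_state[OF n] by simp
    next
      case False
      hence tbp: "0 < tb k" using tb0[of k] by simp
      let ?M = "mat n n (\<lambda>(i,j). B k $$ (i,j) * of_real (1 / tb k))"
      have "psd n ?M"
      proof (rule psd_intro)
        show "?M \<in> carrier_mat n n" by simp
        fix v
        have "qf n ?M v = qf n (B k) v * of_real (1 / tb k)"
          unfolding qf_def sum_distrib_right by (intro sum.cong refl) (simp add: algebra_simps)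
        thus "Im (qf n ?M v) = 0 \<and> 0 \<le> Re (qf n ?M v)" using psd_form[OF pB[of k], of v] tbp by simp
      qed
      moreover have "trace ?M = 1"
      proof -
        have "trace ?M = trace (B k) * of_real (1 / tb k)" unfolding trace_def sum_distrib_right using cB[of k] by simp
        also have "\<dots> = 1" unfolding Bre using False by (simp flip: of_real_mult)
        finally show ?thesis .
      qed
      ultimately show ?thesis unfolding Bn_def is_state_def using False by simp
    qed
    have trm: "of_real (p k) * (A k $$ (c,d) * Bn k $$ (i,j)) = Q k c d * B k $$ (i,j)"
      if "k < m" "c < 2" "d < 2" "i < n" "j < n" for k c d i j
    proof (cases "tq k = 0")
      case True
      have "Q k c d = 0" using psdf_tr0[of "Q k"] pQ that True unfolding tq_def by (auto simp: less2)
      thus ?thesis using True unfolding p_def by simp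
    next
      case F1: False
      show ?thesis
      proof (cases "tb k = 0")
        case True
        have "B k $$ (i,j) = 0" using psd_tr0[OF pB[of k]] True that unfolding tb_def by simp
        thus ?thesis using True unfolding p_def by simp
      next
        case False
        have "A k $$ (c,d) = Q k c d * of_real (1 / tq k)" unfolding A_def using F1 that by simp
        hence qa: "of_real (tq k) * A k $$ (c,d) = Q k c d" using F1 by (simp add: field_simps)
        have "Bn k $$ (i,j) = B k $$ (i,j) * of_real (1 / tb k)" unfolding Bn_def using False that by simp
        hence bb: "of_real (tb k) * Bn k $$ (i,j) = B k $$ (i,j)" using False by (simp add: field_simps)
        show ?thesis unfolding p_def qa[symmetric] bb[symmetric] by (simp add: algebra_simps)
      qed
    qed
    have T: "tensor_id \<phi> n \<rho> = mat (2 * n) (2 * n) (\<lambda>ij. \<Sum>k<m. complex_of_real (p k) * kron (A k) (Bn k) $$ ij)"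
    proof (rule eq_matI)
      fix I J assume IJ: "I < dim_row (mat (2 * n) (2 * n) (\<lambda>ij. \<Sum>k<m. complex_of_real (p k) * kron (A k) (Bn k) $$ ij))"
        "J < dim_col (mat (2 * n) (2 * n) (\<lambda>ij. \<Sum>k<m. complex_of_real (p k) * kron (A k) (Bn k) $$ ij))"
      hence I: "I < 2*n" and J: "J < 2*n" by auto
      have cd: "I div n < 2" "J div n < 2" using I J by (auto simp: div_less_iff_less_mult mult.commute)
      have ij: "I mod n < n" "J mod n < n" using n by auto
      show "tensor_id \<phi> n \<rho> $$ (I, J) = mat (2 * n) (2 * n) (\<lambda>ij. \<Sum>k<m. complex_of_real (p k) * kron (A k) (Bn k) $$ ij) $$ (I, J)"
        unfolding T_entry[OF lin I J mpe] index_mat(1)[OF I J] kron_entry[OF cA cBn I J] B_def[symmetric]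
        using trm cd ij by (intro sum.cong refl) (auto simp: B_def)
    qed (auto simp: tensor_id_def)
    have conds: "\<forall>k<m. 0 \<le> p k \<and> is_state 2 (A k) \<and> is_state n (Bn k)"
    proof (intro allI impI conjI)
      fix k assume k: "k < m"
      show "0 \<le> p k" unfolding p_def using tq0[OF k] tb0[of k] by simp
      show "is_state 2 (A k)" by (rule stA[OF k])
      show "is_state n (Bn k)" by (rule stB)
    qed
    show "separable n (tensor_id \<phi> n \<rho>)" unfolding separable_def
      using conds sum1 T by blast
  qed
qed

theorem mainTheorem9:
  fixes \<phi> :: "complex mat \<Rightarrow> complex mat"
  assumes "qubit_channel \<phi>"
    and "det_superop \<phi> = 0"
  shows "entanglement_breaking \<phi>"
proof -
  have lin: "qubit_linear \<phi>" and cp: "completely_positive \<phi>" and tp: "trace_preserving \<phi>"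
    using assms(1) unfolding qubit_channel_def by auto
  show ?thesis by (rule eb_from_mp[OF lin tp mp_exists[OF lin cp tp assms(2)]])
qed


end
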